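(* Let $V$ be a simple unitary vertex operator algebra and let $a\in V$ be a primary vector of conformal dimension $d_a\neq 1$. Then there is a real number $A\geq 0$ such that $$\|a_m\|_n\leq A\sqrt{1+|m|}\,(1+|n|)\big(\|a_0\|_n+\|a_0\|_{n-m}\big)$$ for all $m,n\in\mathbb{Z}$. Moreover, if $\|a_0(L_0+1_V)^{-s}\|<+\infty$ for some real $s\geq 0$, then $a$ satisfies $(s+1)$-th order energy bounds and $$\|a_m(L_0+1_V)^{-s-1}\|\leq 2A(1+|m|)^{s+\frac12}\,\|a_0(L_0+1_V)^{-s}\|$$ for all $m\in\mathbb{Z}$.
   Context: A simple unitary vertex operator algebra is a vertex operator algebra $V$ (over $\mathbb{C}$) of CFT type, i.e. $V=\bigoplus_{n\geq 0}V_n$ with $V_n=\ker(L_0-n1_V)$ and $V_0=\mathbb{C}\Omega$, with vacuum $\Omega$ and conformal vector $\nu$, $Y(\nu,z)=\sum_{n}L_nz^{-n-2}$, equipped with a scalar product $(\cdot|\cdot)$ with $(\Omega|\Omega)=1$ and an antilinear involution $a\mapsto a^*$ with $\nu^*=\nu$ such that $(b|a_nc)=(a^*_{-n}b|c)$ for all $a,b,c\in V$, $n\in\mathbb{Z}$. For $a\in V$ the modes $a_n\in\mathrm{End}(V)$ are defined by $Y(z^{L_0}a,z)=\sum_{n\in\mathbb{Z}}a_nz^{-n}$. A vector $a$ is primary of conformal dimension $d$ if $a\in V_d$ and $L_ka=0$ for all integers $k>0$. Write $\|a\|=\sqrt{(a|a)}$, $V_{\leq n}=\bigoplus_{k\leq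 n}V_k$; for a linear map $R$ defined on $V$, $\|R\|_n:=\sup\{\|Rb\|: b\in V_{\leq n},\ \|b\|\leq 1\}$ and $\|R\|:=\sup\{\|Rb\|: b\in V,\|b\|\leq1\}$, both in $[0,+\infty]$; $(L_0+1_V)^{-s}$ acts on $V_n$ as multiplication by $(n+1)^{-s}$. A vector $a\in V$ satisfies $s$-th order energy bounds if there are real $C,t\geq 0$ with $\|a_m\|_n\leq C(1+|m|)^t(1+|n|)^s$ for all $m,n\in\mathbb{Z}$. *)

theory Defs
  imports "HOL-Analysis.Analysis" "HOL-Library.Extended_Real"
begin

text \<open>Data of a vertex operator algebra: a complex vector space with carrier type 'v and
scalar multiplication sc; Y a k b denotes the standard mode a_(k) b, i.e.
Y(a,z) = sum_k a_(k) z^(-k-1); Omega the vacuum; nu the conformal vector.\<close>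

definition Lop :: "('v \<Rightarrow> int \<Rightarrow> 'v \<Rightarrow> 'v) \<Rightarrow> 'v \<Rightarrow> int \<Rightarrow> 'v \<Rightarrow> 'v" where
  "Lop Y \<nu> n = Y \<nu> (n + 1)"

definition eigsp :: "(complex \<Rightarrow> 'v::ab_group_add \<Rightarrow> 'v) \<Rightarrow> ('v \<Rightarrow> int \<Rightarrow> 'v \<Rightarrow> 'v) \<Rightarrow> 'v \<Rightarrow> nat \<Rightarrow> 'v set" where
  "eigsp sc Y \<nu> n = {v. Lop Y \<nu> 0 v = sc (of_nat n) v}"

definition hcomp :: "(complex \<Rightarrow> 'v::ab_group_add \<Rightarrow> 'v) \<Rightarrow> ('v \<Rightarrow> int \<Rightarrow> 'v \<Rightarrow> 'v) \<Rightarrow> 'v \<Rightarrow> 'v \<Rightarrow> nat \<Rightarrow> 'v" where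
  "hcomp sc Y \<nu> v = (SOME f. finite {n. f n \<noteq> 0} \<and> (\<forall>n. f n \<in> eigsp sc Y \<nu> n)
       \<and> v = sum f {n. f n \<noteq> 0})"

text \<open>Modes a_n in the convention Y(z^(L_0) a, z) = sum_n a_n z^(-n): for a in V_d one has
a_n = a_(n+d-1); extended linearly in a.\<close>
definition pmode :: "(complex \<Rightarrow> 'v::ab_group_add \<Rightarrow> 'v) \<Rightarrow> ('v \<Rightarrow> int \<Rightarrow> 'v \<Rightarrow> 'v) \<Rightarrow> 'v \<Rightarrow> 'v \<Rightarrow> int \<Rightarrow> 'v \<Rightarrow> 'v" where
  "pmode sc Y \<nu> a n c =
     (\<Sum>d\<in>{d. hcomp sc Y \<nu> a d \<noteq> 0}. Y (hcomp sc Y \<nu> a d) (n + int d - 1) c)"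

definition sgn_pow :: "int \<Rightarrow> complex" where
  "sgn_pow r = (if even r then 1 else -1)"

definition is_VOA :: "(complex \<Rightarrow> 'v::ab_group_add \<Rightarrow> 'v) \<Rightarrow> ('v \<Rightarrow> int \<Rightarrow> 'v \<Rightarrow> 'v) \<Rightarrow> 'v \<Rightarrow> 'v \<Rightarrow> bool" where
  "is_VOA sc Y \<Omega> \<nu> \<longleftrightarrow>
     Vector_Spaces.vector_space sc \<and>
     (\<forall>a k. Vector_Spaces.linear sc sc (Y a k)) \<and>
     (\<forall>k b. Vector_Spaces.linear sc sc (\<lambda>a. Y a k b)) \<and>
     \<comment> \<open>truncation\<close>
     (\<forall>a b. \<exists>N. \<forall>k\<ge>N. Y a k b = 0) \<and>
     \<comment> \<open>vacuum\<close>
     (\<forall>k b. Y \<Omega> k b = (if k = -1 then b else 0)) \<and>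
     (\<forall>a. Y a (-1) \<Omega> = a \<and> (\<forall>k\<ge>0. Y a k \<Omega> = 0)) \<and>
     \<comment> \<open>Borcherds (Jacobi) identity; sums are finite by truncation\<close>
     (\<forall>a b c p q r. \<forall>\<^sub>F M in sequentially.
        (\<Sum>i<M. sc ((of_int p) gchoose i) (Y (Y a (r + int i) b) (p + q - int i) c)) =
        (\<Sum>i<M. sc ((-1)^i * ((of_int r) gchoose i))
            (Y a (p + r - int i) (Y b (q + int i) c)
             - sc (sgn_pow r) (Y b (q + r - int i) (Y a (p + int i) c))))) \<and>
     \<comment> \<open>conformal vector: Virasoro relations, L_(-1)-derivative property, nu in V_2\<close>
     (\<exists>cc::complex. \<forall>m n b.
        Lop Y \<nu> m (Lop Y \<nu> n b) - Lop Y \<nu> n (Lop Y \<nu> m b) =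
        sc (of_int (m - n)) (Lop Y \<nu> (m + n) b)
        + (if m + n = 0 then sc (cc / 12 * of_int (m^3 - m)) b else 0)) \<and>
     (\<forall>a k b. Y (Lop Y \<nu> (-1) a) k b = sc (- of_int k) (Y a (k - 1) b)) \<and>
     \<nu> \<in> eigsp sc Y \<nu> 2 \<and>
     \<comment> \<open>grading V = direct sum of V_n, n \<ge> 0, with finite-dimensional V_n\<close>
     (\<forall>v. \<exists>f::nat \<Rightarrow> 'v. finite {n. f n \<noteq> 0} \<and> (\<forall>n. f n \<in> eigsp sc Y \<nu> n)
            \<and> v = sum f {n. f n \<noteq> 0}) \<and>
     (\<forall>z::complex. \<forall>v. Lop Y \<nu> 0 v = sc z v \<and> v \<noteq> 0 \<longrightarrow> (\<exists>n::nat. z = of_nat n)) \<and>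
     (\<forall>n. \<exists>B. finite B \<and> eigsp sc Y \<nu> n \<subseteq> module.span sc B) \<and>
     \<comment> \<open>CFT type\<close>
     eigsp sc Y \<nu> 0 = range (\<lambda>z. sc z \<Omega>)"

definition vnorm :: "('v \<Rightarrow> 'v \<Rightarrow> complex) \<Rightarrow> 'v \<Rightarrow> real" where
  "vnorm sp v = sqrt (Re (sp v v))"

definition simple_unitary_VOA ::
  "(complex \<Rightarrow> 'v::ab_group_add \<Rightarrow> 'v) \<Rightarrow> ('v \<Rightarrow> int \<Rightarrow> 'v \<Rightarrow> 'v) \<Rightarrow> 'v \<Rightarrow> 'v
    \<Rightarrow> ('v \<Rightarrow> 'v \<Rightarrow> complex) \<Rightarrow> ('v \<Rightarrow> 'v) \<Rightarrow> bool" where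
  "simple_unitary_VOA sc Y \<Omega> \<nu> sp star \<longleftrightarrow>
     is_VOA sc Y \<Omega> \<nu> \<and>
     \<comment> \<open>simplicity\<close>
     (\<forall>I. module.subspace sc I \<and> (\<forall>a b k. b \<in> I \<longrightarrow> Y a k b \<in> I) \<longrightarrow> I = {0} \<or> I = UNIV) \<and>
     \<comment> \<open>scalar product\<close>
     (\<forall>x y z. sp x (y + z) = sp x y + sp x z) \<and>
     (\<forall>x y c. sp x (sc c y) = c * sp x y) \<and>
     (\<forall>x y. sp y x = cnj (sp x y)) \<and>
     (\<forall>x. x \<noteq> 0 \<longrightarrow> Re (sp x x) > 0) \<and>
     sp \<Omega> \<Omega> = 1 \<and>
     \<comment> \<open>antilinear involution\<close>
     (\<forall>x y. star (x + y) = star x + star y) \<and>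
     (\<forall>c x. star (sc c x) = sc (cnj c) (star x)) \<and>
     (\<forall>x. star (star x) = x) \<and>
     star \<nu> = \<nu> \<and>
     (\<forall>a b c n. sp b (pmode sc Y \<nu> a n c) = sp (pmode sc Y \<nu> (star a) (- n) b) c)"

definition primary :: "(complex \<Rightarrow> 'v::ab_group_add \<Rightarrow> 'v) \<Rightarrow> ('v \<Rightarrow> int \<Rightarrow> 'v \<Rightarrow> 'v) \<Rightarrow> 'v \<Rightarrow> 'v \<Rightarrow> nat \<Rightarrow> bool" where
  "primary sc Y \<nu> a d \<longleftrightarrow> a \<in> eigsp sc Y \<nu> d \<and> (\<forall>k>0. Lop Y \<nu> k a = 0)"

text \<open>V_{\<le> n} (for integer n; empty sum = {0} when n < 0)\<close>
definition Vle :: "(complex \<Rightarrow> 'v::ab_group_add \<Rightarrow> 'v) \<Rightarrow> ('v \<Rightarrow> int \<Rightarrow> 'v \<Rightarrow> 'v) \<Rightarrow> 'v \<Rightarrow> int \<Rightarrow> 'v set" where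
  "Vle sc Y \<nu> n = {v. \<forall>k. hcomp sc Y \<nu> v k \<noteq> 0 \<longrightarrow> int k \<le> n}"

definition opnorm_le :: "(complex \<Rightarrow> 'v::ab_group_add \<Rightarrow> 'v) \<Rightarrow> ('v \<Rightarrow> int \<Rightarrow> 'v \<Rightarrow> 'v) \<Rightarrow> 'v
    \<Rightarrow> ('v \<Rightarrow> 'v \<Rightarrow> complex) \<Rightarrow> ('v \<Rightarrow> 'v) \<Rightarrow> int \<Rightarrow> ereal" where
  "opnorm_le sc Y \<nu> sp R n =
     Sup {ereal (vnorm sp (R b)) | b. b \<in> Vle sc Y \<nu> n \<and> vnorm sp b \<le> 1}"

definition opnorm :: "('v \<Rightarrow> 'v \<Rightarrow> complex) \<Rightarrow> ('v \<Rightarrow> 'v) \<Rightarrow> ereal" where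
  "opnorm sp R = Sup {ereal (vnorm sp (R b)) | b. vnorm sp b \<le> 1}"

definition L0pow :: "(complex \<Rightarrow> 'v::ab_group_add \<Rightarrow> 'v) \<Rightarrow> ('v \<Rightarrow> int \<Rightarrow> 'v \<Rightarrow> 'v) \<Rightarrow> 'v \<Rightarrow> real \<Rightarrow> 'v \<Rightarrow> 'v" where
  "L0pow sc Y \<nu> s b =
     (\<Sum>k\<in>{k. hcomp sc Y \<nu> b k \<noteq> 0}. sc (of_real ((real k + 1) powr (- s))) (hcomp sc Y \<nu> b k))"

definition energy_bounds :: "(complex \<Rightarrow> 'v::ab_group_add \<Rightarrow> 'v) \<Rightarrow> ('v \<Rightarrow> int \<Rightarrow> 'v \<Rightarrow> 'v) \<Rightarrow> 'v
    \<Rightarrow> ('v \<Rightarrow> 'v \<Rightarrow> complex) \<Rightarrow> real \<Rightarrow> 'v \<Rightarrow> bool" where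
  "energy_bounds sc Y \<nu> sp s a \<longleftrightarrow>
     (\<exists>C t. C \<ge> 0 \<and> t \<ge> 0 \<and> (\<forall>m n::int.
        opnorm_le sc Y \<nu> sp (pmode sc Y \<nu> a m) n
          \<le> ereal (C * (1 + real_of_int \<bar>m\<bar>) powr t * (1 + real_of_int \<bar>n\<bar>) powr s)))"

end

theory Submission
  imports Defs
begin


lemma lin_mh: "Vector_Spaces.linear s s f \<Longrightarrow> module_hom s s f"
  by (simp add: module_hom_iff_linear)

locale suv =
  fixes sc :: "complex \<Rightarrow> 'v::ab_group_add \<Rightarrow> 'v"
    and Y :: "'v \<Rightarrow> int \<Rightarrow> 'v \<Rightarrow> 'v"
    and \<Omega> \<nu> :: 'v and sp :: "'v \<Rightarrow> 'v \<Rightarrow> complex" and star :: "'v \<Rightarrow> 'v"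
  assumes SU: "simple_unitary_VOA sc Y \<Omega> \<nu> sp star"
begin

lemmas SUu = SU[unfolded simple_unitary_VOA_def]
lemmas VOA = SUu[THEN conjunct1]
lemmas simple = SUu[THEN conjunct2, THEN conjunct1]
lemmas spA = SUu[THEN conjunct2, THEN conjunct2, THEN conjunct1]
lemmas spS = SUu[THEN conjunct2, THEN conjunct2, THEN conjunct2, THEN conjunct1]
lemmas spC = SUu[THEN conjunct2, THEN conjunct2, THEN conjunct2, THEN conjunct2, THEN conjunct1]
lemmas sp_pos = SUu[THEN conjunct2, THEN conjunct2, THEN conjunct2, THEN conjunct2, THEN conjunct2, THEN conjunct1]
lemmas sp_Om = SUu[THEN conjunct2, THEN conjunct2, THEN conjunct2, THEN conjunct2, THEN conjunct2, THEN conjunct2, THEN conjunct1]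
lemmas star_add = SUu[THEN conjunct2, THEN conjunct2, THEN conjunct2, THEN conjunct2, THEN conjunct2, THEN conjunct2, THEN conjunct2, THEN conjunct1]
lemmas star_sc = SUu[THEN conjunct2, THEN conjunct2, THEN conjunct2, THEN conjunct2, THEN conjunct2, THEN conjunct2, THEN conjunct2, THEN conjunct2, THEN conjunct1]
lemmas star_star = SUu[THEN conjunct2, THEN conjunct2, THEN conjunct2, THEN conjunct2, THEN conjunct2, THEN conjunct2, THEN conjunct2, THEN conjunct2, THEN conjunct2, THEN conjunct1]
lemmas star_nu = SUu[THEN conjunct2, THEN conjunct2, THEN conjunct2, THEN conjunct2, THEN conjunct2, THEN conjunct2, THEN conjunct2, THEN conjunct2, THEN conjunct2, THEN conjunct2, THEN conjunct1]
lemmas adj = SUu[THEN conjunct2, THEN conjunct2, THEN conjunct2, THEN conjunct2, THEN conjunct2, THEN conjunct2, THEN conjunct2, THEN conjunct2, THEN conjunct2, THEN conjunct2, THEN conjunct2]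
lemmas VOAu = VOA[unfolded is_VOA_def]
lemmas vsp = VOAu[THEN conjunct1]
lemmas linY_all = VOAu[THEN conjunct2, THEN conjunct1]
lemmas linY1_all = VOAu[THEN conjunct2, THEN conjunct2, THEN conjunct1]
lemmas trunc = VOAu[THEN conjunct2, THEN conjunct2, THEN conjunct2, THEN conjunct1]
lemmas vacY = VOAu[THEN conjunct2, THEN conjunct2, THEN conjunct2, THEN conjunct2, THEN conjunct1]
lemmas vacuum2 = VOAu[THEN conjunct2, THEN conjunct2, THEN conjunct2, THEN conjunct2, THEN conjunct2, THEN conjunct1]
lemmas borch = VOAu[THEN conjunct2, THEN conjunct2, THEN conjunct2, THEN conjunct2, THEN conjunct2, THEN conjunct2, THEN conjunct1]
lemmas vir_ex = VOAu[THEN conjunct2, THEN conjunct2, THEN conjunct2, THEN conjunct2, THEN conjunct2, THEN conjunct2, THEN conjunct2, THEN conjunct1]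
lemmas deriv = VOAu[THEN conjunct2, THEN conjunct2, THEN conjunct2, THEN conjunct2, THEN conjunct2, THEN conjunct2, THEN conjunct2, THEN conjunct2, THEN conjunct1]
lemmas nu_eig = VOAu[THEN conjunct2, THEN conjunct2, THEN conjunct2, THEN conjunct2, THEN conjunct2, THEN conjunct2, THEN conjunct2, THEN conjunct2, THEN conjunct2, THEN conjunct1]
lemmas grading0 = VOAu[THEN conjunct2, THEN conjunct2, THEN conjunct2, THEN conjunct2, THEN conjunct2, THEN conjunct2, THEN conjunct2, THEN conjunct2, THEN conjunct2, THEN conjunct2, THEN conjunct1]
lemmas eig_nat = VOAu[THEN conjunct2, THEN conjunct2, THEN conjunct2, THEN conjunct2, THEN conjunct2, THEN conjunct2, THEN conjunct2, THEN conjunct2, THEN conjunct2, THEN conjunct2, THEN conjunct2, THEN conjunct1]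
lemmas fin_dim = VOAu[THEN conjunct2, THEN conjunct2, THEN conjunct2, THEN conjunct2, THEN conjunct2, THEN conjunct2, THEN conjunct2, THEN conjunct2, THEN conjunct2, THEN conjunct2, THEN conjunct2, THEN conjunct2, THEN conjunct1]
lemmas V0 = VOAu[THEN conjunct2, THEN conjunct2, THEN conjunct2, THEN conjunct2, THEN conjunct2, THEN conjunct2, THEN conjunct2, THEN conjunct2, THEN conjunct2, THEN conjunct2, THEN conjunct2, THEN conjunct2, THEN conjunct2]

sublocale vs: vector_space sc by (rule vsp)

lemma mhY: "module_hom sc sc (Y a k)" using linY_all by (intro lin_mh) blast
lemma mhY1: "module_hom sc sc (\<lambda>a. Y a k b)" using linY1_all by (intro lin_mh) blast

lemma Y_add: "Y a k (x + y) = Y a k x + Y a k y" by (rule module_hom.add[OF mhY])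
lemma Y_sc: "Y a k (sc c x) = sc c (Y a k x)" by (rule module_hom.scale[OF mhY])
lemma Y_0: "Y a k 0 = 0" by (rule module_hom.zero[OF mhY])
lemma Y_diff: "Y a k (x - y) = Y a k x - Y a k y" by (rule module_hom.diff[OF mhY])
lemma Y_sum: "Y a k (sum g S) = (\<Sum>i\<in>S. Y a k (g i))" by (rule module_hom.sum[OF mhY])
lemma Y1_add: "Y (a + b) k c = Y a k c + Y b k c" using module_hom.add[OF mhY1] by metis
lemma Y1_sc: "Y (sc z a) k c = sc z (Y a k c)" using module_hom.scale[OF mhY1] by metis
lemma Y1_0: "Y 0 k c = 0" using module_hom.zero[OF mhY1] by metis
lemma Y1_sum: "Y (sum g S) k c = (\<Sum>i\<in>S. Y (g i) k c)" using module_hom.sum[OF mhY1] by metis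

lemma sc_eq0: "sc c x = 0 \<Longrightarrow> c \<noteq> 0 \<Longrightarrow> x = 0"
proof -
  assume a: "sc c x = 0" "c \<noteq> 0"
  have "x = sc (inverse c * c) x" using a by simp
  also have "\<dots> = sc (inverse c) (sc c x)" by simp
  finally show ?thesis using a by simp
qed

abbreviation L where "L n \<equiv> Lop Y \<nu> n"

lemma L_def': "L n = Y \<nu> (n + 1)" by (simp add: Lop_def)

lemma L_add: "L n (x + y) = L n x + L n y" by (simp add: Lop_def Y_add)
lemma L_sc: "L n (sc c x) = sc c (L n x)" by (simp add: Lop_def Y_sc)
lemma L_0: "L n 0 = 0" by (simp add: Lop_def Y_0)
lemma L_diff: "L n (x - y) = L n x - L n y" by (simp add: Lop_def Y_diff)
lemma L_sum: "L n (sum g S) = (\<Sum>i\<in>S. L n (g i))" by (simp add: Lop_def Y_sum)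

definition W :: "complex \<Rightarrow> 'v set" where "W z = {v. L 0 v = sc z v}"

lemma eigsp_W: "eigsp sc Y \<nu> n = W (of_nat n)" by (simp add: eigsp_def W_def)

lemma W_0[simp]: "0 \<in> W z" by (simp add: W_def L_0)
lemma W_add: "x \<in> W z \<Longrightarrow> y \<in> W z \<Longrightarrow> x + y \<in> W z"
  by (simp add: W_def L_add vs.scale_right_distrib)
lemma W_sc: "x \<in> W z \<Longrightarrow> sc c x \<in> W z"
  by (simp add: W_def L_sc vs.scale_left_commute)
lemma W_diff: "x \<in> W z \<Longrightarrow> y \<in> W z \<Longrightarrow> x - y \<in> W z"
  by (simp add: W_def L_diff vs.scale_right_diff_distrib)
lemma W_sum: "(\<And>i. i \<in> S \<Longrightarrow> g i \<in> W z) \<Longrightarrow> sum g S \<in> W z"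
  by (induct S rule: infinite_finite_induct) (auto intro: W_add)

lemma W_nat: "v \<in> W z \<Longrightarrow> v \<noteq> 0 \<Longrightarrow> \<exists>n::nat. z = of_nat n"
  using eig_nat unfolding W_def by blast

lemma W_neg: "v \<in> W (of_int j) \<Longrightarrow> j < 0 \<Longrightarrow> v = 0"
proof (rule ccontr)
  assume "v \<in> W (of_int j)" "j < 0" "v \<noteq> 0"
  then obtain n::nat where "(of_int j::complex) = of_nat n" using W_nat by blast
  then have "j = int n" by (metis of_int_eq_iff of_int_of_nat_eq)
  with \<open>j<0\<close> show False by simp
qed

lemma grading: "\<exists>f::nat \<Rightarrow> 'v. finite {n. f n \<noteq> 0} \<and> (\<forall>n. f n \<in> W (of_nat n)) \<and> v = sum f {n. f n \<noteq> 0}"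
  using grading0 unfolding eigsp_W by blast

lemma indep: "finite S \<Longrightarrow> (\<forall>n\<in>S. g n \<in> W (of_nat n)) \<Longrightarrow> sum g S = 0 \<Longrightarrow> \<forall>n\<in>S. g n = 0"
proof (induct S arbitrary: g rule: finite_induct)
  case empty then show ?case by simp
next
  case (insert a S g)
  define h where "h n = sc (of_nat n - of_nat a) (g n)" for n
  have hW: "\<forall>n\<in>S. h n \<in> W (of_nat n)" using insert by (auto simp: h_def intro: W_sc)
  have e: "g a + sum g S = 0" using insert by simp
  have "L 0 (g a + sum g S) - sc (of_nat a) (g a + sum g S) = 0" using e by (simp add: L_0)
  moreover have "L 0 (g a) = sc (of_nat a) (g a)" using insert by (simp add: W_def)
  moreover have "L 0 (sum g S) = (\<Sum>n\<in>S. sc (of_nat n) (g n))"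
    using insert by (simp add: L_sum W_def)
  ultimately have "(\<Sum>n\<in>S. sc (of_nat n) (g n)) - sc (of_nat a) (sum g S) = 0"
    by (simp add: L_add vs.scale_right_distrib)
  then have "sum h S = 0"
    by (simp add: h_def vs.scale_left_diff_distrib sum_subtractf vs.scale_sum_right)
  then have "\<forall>n\<in>S. h n = 0" using insert hW by blast
  then have gS: "\<forall>n\<in>S. g n = 0"
  proof (intro ballI)
    fix n assume n: "n \<in> S" and h0: "\<forall>n\<in>S. h n = 0"
    then have "n \<noteq> a" using insert by auto
    then have "(of_nat n - of_nat a :: complex) \<noteq> 0" by simp
    then show "g n = 0" using h0 n sc_eq0 unfolding h_def by blast
  qed
  then have "sum g S = 0" by simp
  with e have "g a = 0" by simp
  with gS show ?case by simp
qed

end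

context suv
begin

abbreviation hc where "hc \<equiv> hcomp sc Y \<nu>"

lemma hcomp_prop: "finite {n. hc v n \<noteq> 0} \<and> (\<forall>n. hc v n \<in> W (of_nat n)) \<and> v = sum (hc v) {n. hc v n \<noteq> 0}"
proof -
  define P where "P = (\<lambda>f::nat \<Rightarrow> 'v. finite {n. f n \<noteq> 0} \<and> (\<forall>n. f n \<in> W (of_nat n)) \<and> v = sum f {n. f n \<noteq> 0})"
  have "Ex P" using grading[of v] unfolding P_def .
  then have "P (Eps P)" by (rule someI_ex)
  moreover have "hc v = Eps P" unfolding hcomp_def eigsp_W P_def ..
  ultimately show ?thesis unfolding P_def by simp
qed

lemma W_uminus: "x \<in> W z \<Longrightarrow> - x \<in> W z" using W_diff[of 0 z x] by simp

lemma hc_fin: "finite {n. hc v n \<noteq> 0}" using hcomp_prop by blast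
lemma hc_W: "hc v n \<in> W (of_nat n)" using hcomp_prop by blast
lemma hc_sum: "v = sum (hc v) {n. hc v n \<noteq> 0}" using hcomp_prop by blast

lemma hc_sum_sup: "finite T \<Longrightarrow> {n. hc v n \<noteq> 0} \<subseteq> T \<Longrightarrow> v = sum (hc v) T"
proof -
  assume "finite T" "{n. hc v n \<noteq> 0} \<subseteq> T"
  then have "sum (hc v) T = sum (hc v) {n. hc v n \<noteq> 0}"
    by (intro sum.mono_neutral_right) auto
  then show ?thesis using hc_sum by simp
qed

lemma hcomp_eq:
  assumes fS: "finite S" and fW: "\<forall>n\<in>S. f n \<in> W (of_nat n)"
  shows "hc (sum f S) = (\<lambda>n. if n \<in> S then f n else 0)"
proof -
  define v where "v = sum f S"
  define T where "T = {n. hc v n \<noteq> 0}"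
  have fT: "finite T" unfolding T_def by (rule hc_fin)
  define g where "g n = (if n \<in> S then f n else 0) - hc v n" for n
  have gW: "\<forall>n\<in>S \<union> T. g n \<in> W (of_nat n)"
    using fW hc_W by (auto simp: g_def intro!: W_diff W_uminus)
  have s1: "sum (\<lambda>n. if n \<in> S then f n else 0) (S \<union> T) = sum f S"
    using fS fT by (subst sum.mono_neutral_right[of "S \<union> T" S]) auto
  have s2': "v = sum (hc v) (S \<union> T)"
    by (rule hc_sum_sup) (use fS fT in \<open>auto simp: T_def\<close>)
  have s2: "sum (hc v) (S \<union> T) = v" using s2' by simp
  have "sum g (S \<union> T) = sum (\<lambda>n. if n \<in> S then f n else 0) (S \<union> T) - sum (hc v) (S \<union> T)"
    by (simp add: g_def sum_subtractf)
  also have "\<dots> = 0" using s1 s2 v_def by simp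
  finally have "sum g (S \<union> T) = 0" .
  then have z: "\<forall>n\<in>S \<union> T. g n = 0" using indep[OF _ gW] fS fT by blast
  show ?thesis unfolding v_def[symmetric]
  proof
    fix n show "hc v n = (if n \<in> S then f n else 0)"
    proof (cases "n \<in> S \<union> T")
      case True then show ?thesis using z by (auto simp: g_def)
    next
      case False then show ?thesis by (auto simp: T_def)
    qed
  qed
qed

lemma hc_hom: "v \<in> W (of_nat n) \<Longrightarrow> hc v = (\<lambda>k. if k = n then v else 0)"
  using hcomp_eq[of "{n}" "\<lambda>_. v"] by auto

lemma hc_zero: "hc 0 = (\<lambda>k. 0)"
  using hcomp_eq[of "{}" "\<lambda>_. 0"] by auto

lemma hc_add: "hc (x + y) = (\<lambda>n. hc x n + hc y n)"
proof -
  let ?T = "{n. hc x n \<noteq> 0} \<union> {n. hc y n \<noteq> 0}"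
  have f: "finite ?T" using hc_fin by blast
  have "x + y = sum (\<lambda>n. hc x n + hc y n) ?T"
    using hc_sum_sup[OF f, of x] hc_sum_sup[OF f, of y] by (simp add: sum.distrib)
  then have "hc (x + y) = (\<lambda>n. if n \<in> ?T then hc x n + hc y n else 0)"
    using hcomp_eq[OF f, of "\<lambda>n. hc x n + hc y n"] hc_W W_add by simp
  then show ?thesis by auto
qed

lemma hc_sc: "hc (sc c x) = (\<lambda>n. sc c (hc x n))"
proof -
  let ?T = "{n. hc x n \<noteq> 0}"
  have f: "finite ?T" using hc_fin by blast
  have "sc c x = sum (\<lambda>n. sc c (hc x n)) ?T"
    using hc_sum[of x] by (metis vs.scale_sum_right)
  then have "hc (sc c x) = (\<lambda>n. if n \<in> ?T then sc c (hc x n) else 0)"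
    using hcomp_eq[OF f, of "\<lambda>n. sc c (hc x n)"] hc_W W_sc by simp
  then show ?thesis by auto
qed

lemma nu_W2: "\<nu> \<in> W (of_nat 2)" using nu_eig by (simp add: eigsp_W)

lemma pmode_hom: assumes "a \<in> W (of_nat d)" shows "pmode sc Y \<nu> a n c = Y a (n + int d - 1) c"
proof (cases "a = 0")
  case True then show ?thesis by (simp add: pmode_def hc_zero Y1_0)
next
  case False
  have "{k. hc a k \<noteq> 0} = {d}" using hc_hom[OF assms] False by auto
  then show ?thesis using hc_hom[OF assms] by (simp add: pmode_def)
qed

lemma pmode_nu: "pmode sc Y \<nu> \<nu> n c = L n c"
  using pmode_hom[OF nu_W2] by (simp add: Lop_def add.commute)

lemma L_adj: "sp b (L n c) = sp (L (- n) b) c"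
  using adj star_nu pmode_nu by metis

lemma spA': "sp (x + y) z = sp x z + sp y z" by (metis spA spC complex_cnj_add)
lemma spS': "sp (sc c x) y = cnj c * sp x y" by (metis spS spC complex_cnj_mult complex_cnj_cnj)
lemma sp_0r[simp]: "sp x 0 = 0" using spA[rule_format, of x 0 0] by simp
lemma sp_0l[simp]: "sp 0 x = 0" using spA'[of 0 0 x] by simp
lemma sp_diff_r: "sp x (y - z) = sp x y - sp x z" by (metis spA add_diff_cancel eq_diff_eq)
lemma sp_diff_l: "sp (y - z) x = sp y x - sp z x" by (metis spA' add_diff_cancel eq_diff_eq)
lemma sp_sum_r: "sp x (sum f S) = (\<Sum>i\<in>S. sp x (f i))"
  by (induct S rule: infinite_finite_induct) (auto simp: spA)
lemma sp_sum_l: "sp (sum f S) x = (\<Sum>i\<in>S. sp (f i) x)"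
  by (induct S rule: infinite_finite_induct) (auto simp: spA')

definition nsq where "nsq x = Re (sp x x)"

lemma sp_self_real: "sp x x = of_real (nsq x)"
proof -
  have "sp x x = cnj (sp x x)" using spC by metis
  then have "Im (sp x x) = 0" by (metis cnj.sel(2) neg_equal_zero)
  then show ?thesis by (simp add: nsq_def complex_eq_iff)
qed

lemma nsq_nonneg: "nsq x \<ge> 0"
  using sp_pos[rule_format, of x] by (cases "x = 0") (auto simp: nsq_def less_imp_le)

lemma nsq_pos: "x \<noteq> 0 \<Longrightarrow> nsq x > 0" using sp_pos by (simp add: nsq_def)

lemma nsq_0_iff: "nsq x = 0 \<longleftrightarrow> x = 0"
  using nsq_pos by (auto simp: nsq_def) (metis less_irrefl)

lemma vnorm_nsq: "vnorm sp x = sqrt (nsq x)" by (simp add: vnorm_def nsq_def)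
lemma vnorm_nonneg: "vnorm sp x \<ge> 0" using nsq_nonneg[of x] by (simp add: vnorm_nsq)
lemma vnorm_sq: "(vnorm sp x)^2 = nsq x" using nsq_nonneg[of x] by (simp add: vnorm_nsq)
lemma vnorm_0_iff: "vnorm sp x = 0 \<longleftrightarrow> x = 0" by (simp add: vnorm_nsq nsq_0_iff)
lemma vnorm_0[simp]: "vnorm sp 0 = 0" by (simp add: vnorm_0_iff)

lemma nsq_add: "nsq (x + y) = nsq x + 2 * Re (sp x y) + nsq y"
proof -
  have "sp (x+y) (x+y) = sp x x + sp x y + (sp y x + sp y y)" by (simp add: spA spA')
  moreover have "Re (sp y x) = Re (sp x y)" using spC by (metis cnj.sel(1))
  ultimately show ?thesis by (simp add: nsq_def)
qed

lemma nsq_sc: "nsq (sc c x) = (cmod c)^2 * nsq x"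
proof -
  have "sp (sc c x) (sc c x) = (cnj c * c) * sp x x" by (simp add: spS spS')
  also have "cnj c * c = of_real ((cmod c)^2)"
    by (metis complex_norm_square mult.commute of_real_power)
  finally have "sp (sc c x) (sc c x) = of_real ((cmod c)^2) * of_real (nsq x)"
    by (simp add: sp_self_real)
  also have "\<dots> = of_real ((cmod c)^2 * nsq x)" by simp
  finally show ?thesis by (simp add: nsq_def)
qed

lemma vnorm_sc: "vnorm sp (sc c x) = cmod c * vnorm sp x"
  by (simp add: vnorm_nsq nsq_sc real_sqrt_mult)

lemma Re_sp_le: "Re (sp x y) \<le> vnorm sp x * vnorm sp y"
proof (cases "x = 0 \<or> y = 0")
  case True then show ?thesis by auto
next
  case False
  define nx ny where "nx = vnorm sp x" and "ny = vnorm sp y"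
  have px: "nx > 0" and py: "ny > 0" using False vnorm_nonneg vnorm_0_iff
    by (auto simp: nx_def ny_def less_le)
  define t where "t = nx / ny"
  have "0 \<le> nsq (x + sc (of_real (- t)) y)" by (rule nsq_nonneg)
  also have "\<dots> = nx^2 - 2 * t * Re (sp x y) + t^2 * ny^2"
    by (simp only: nsq_add nsq_sc spS) (simp add: vnorm_sq nx_def ny_def)
  also have "t^2 * ny^2 = nx^2" using py by (simp add: t_def power_divide)
  finally have "2 * t * Re (sp x y) \<le> 2 * nx^2" by simp
  then have "t * Re (sp x y) \<le> t * (nx * ny)" using py by (simp add: t_def power2_eq_square)
  moreover have "t > 0" using px py by (simp add: t_def)
  ultimately show ?thesis by (simp add: nx_def ny_def)
qed

lemma cmod_sp_le_sq: "Re (sp x y) \<le> sqrt (nsq x) * sqrt (nsq y)"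
  using Re_sp_le by (simp add: vnorm_nsq)

lemma vnorm_tri: "vnorm sp (x + y) \<le> vnorm sp x + vnorm sp y"
proof -
  have "(vnorm sp (x+y))^2 \<le> (vnorm sp x + vnorm sp y)^2"
    using Re_sp_le[of x y] by (simp add: vnorm_sq nsq_add power2_sum)
  then show ?thesis using vnorm_nonneg by (meson add_nonneg_nonneg power2_le_imp_le)
qed

lemma vnorm_neg: "vnorm sp (- x) = vnorm sp x"
  using vnorm_sc[of "-1" x] by simp

lemma vnorm_tri_diff: "vnorm sp (x - y) \<le> vnorm sp x + vnorm sp y"
  using vnorm_tri[of x "- y"] vnorm_neg by simp

lemma nsq_pyth:
  assumes "finite S" "\<And>i j. i \<in> S \<Longrightarrow> j \<in> S \<Longrightarrow> i \<noteq> j \<Longrightarrow> sp (f i) (f j) = 0"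
  shows "nsq (sum f S) = (\<Sum>i\<in>S. nsq (f i))"
  using assms
proof (induct S rule: finite_induct)
  case empty then show ?case by (simp add: nsq_def)
next
  case (insert a S)
  have "sp (f a) (sum f S) = 0" using insert by (auto simp: sp_sum_r intro!: sum.neutral)
  then show ?case using insert by (simp add: nsq_add)
qed

lemma W_orth:
  assumes "x \<in> W (of_int i)" "y \<in> W (of_int j)" "i \<noteq> j"
  shows "sp x y = 0"
proof -
  have e1: "sp x (L 0 y) = of_int j * sp x y" using assms by (simp add: W_def spS)
  have e2: "sp x (L 0 y) = sp (L 0 x) y" using L_adj[of x 0 y] by simp
  have e3: "sp (L 0 x) y = of_int i * sp x y" using assms by (simp add: W_def spS')
  have e: "of_int j * sp x y = of_int i * sp x y" using e1 e2 e3 by metis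
  have "(of_int j - of_int i) * sp x y = 0" using e by (simp add: left_diff_distrib)
  moreover have "(of_int j - of_int i :: complex) \<noteq> 0" using assms(3) by simp
  ultimately show ?thesis by simp
qed

lemma W_nat_int: "W (of_nat n) = W (of_int (int n))" by simp

end

context suv
begin

definition cc where "cc = (SOME cc. \<forall>m n b.
        L m (L n b) - L n (L m b) =
        sc (of_int (m - n)) (L (m + n) b)
        + (if m + n = 0 then sc (cc / 12 * of_int (m^3 - m)) b else 0))"

lemma vir: "L m (L n b) - L n (L m b) =
        sc (of_int (m - n)) (L (m + n) b)
        + (if m + n = 0 then sc (cc / 12 * of_int (m^3 - m)) b else 0)"
proof -
  have "\<forall>m n b. L m (L n b) - L n (L m b) =
        sc (of_int (m - n)) (L (m + n) b)
        + (if m + n = 0 then sc (cc / 12 * of_int (m^3 - m)) b else 0)"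
    unfolding cc_def by (rule someI_ex) (rule vir_ex)
  then show ?thesis by blast
qed

lemma L_W: assumes "c \<in> W (of_int k)" shows "L m c \<in> W (of_int (k - m))"
proof -
  have v: "L 0 (L m c) - L m (L 0 c) = sc (- of_int m) (L m c)"
    using vir[of 0 m c] by (cases "m = 0") auto
  then have "L 0 (L m c) = L m (L 0 c) + sc (- of_int m) (L m c)"
    by (metis diff_eq_eq add.commute)
  also have "L m (L 0 c) = sc (of_int k) (L m c)" using assms by (simp add: W_def L_sc)
  finally have "L 0 (L m c) = sc (of_int k - of_int m) (L m c)"
    by (simp add: vs.scale_left_diff_distrib)
  then show ?thesis by (simp add: W_def)
qed

lemma Re_mult_real: "Re (z * of_real r) = Re z * r" by simp

lemma nsq_Lneg:
  assumes "c \<in> W (of_int k)"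
  shows "nsq (L (- m) c) = nsq (L m c) + (2 * real_of_int m * real_of_int k + Re cc / 12 * real_of_int (m^3 - m)) * nsq c"
proof -
  have v: "L m (L (-m) c) - L (-m) (L m c) = sc (of_int (m - - m)) (L (m + - m) c)
        + (if m + - m = 0 then sc (cc / 12 * of_int (m^3 - m)) c else 0)" by (rule vir)
  have v2: "L m (L (-m) c) = L (-m) (L m c) + sc (of_int (2*m) * of_int k) c + sc (cc / 12 * of_int (m^3 - m)) c"
    using v assms by (simp add: W_def diff_eq_eq add_ac)
  have "sp (L (-m) c) (L (-m) c) = sp c (L m (L (-m) c))" using L_adj[of c m "L (-m) c"] by simp
  also have "\<dots> = sp c (L (-m) (L m c)) + (of_int (2*m) * of_int k) * sp c c + (cc / 12 * of_int (m^3 - m)) * sp c c"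
    unfolding v2 by (simp add: spA spS)
  also have "sp c (L (-m) (L m c)) = sp (L m c) (L m c)" using L_adj[of c "-m" "L m c"] by simp
  finally have e: "sp (L (-m) c) (L (-m) c) = sp (L m c) (L m c) + (of_int (2*m) * of_int k) * sp c c + (cc / 12 * of_int (m^3 - m)) * sp c c" .
  have "nsq (L (-m) c) = Re (sp (L (-m) c) (L (-m) c))" by (simp add: nsq_def)
  also have "\<dots> = nsq (L m c) + Re ((of_int (2*m) * of_int k) * of_real (nsq c)) + Re ((cc / 12 * of_int (m^3 - m)) * of_real (nsq c))"
    unfolding e by (simp add: sp_self_real)
  also have "\<dots> = nsq (L m c) + (2 * real_of_int m * real_of_int k + Re cc / 12 * real_of_int (m^3 - m)) * nsq c"
    by (simp add: algebra_simps)
  finally show ?thesis .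
qed

definition K where "K = \<bar>Re cc\<bar> / 12"
lemma K_nonneg: "K \<ge> 0" by (simp add: K_def)

lemma nsq_le_from_sp:
  assumes "nsq x \<le> vnorm sp c * vnorm sp y" "vnorm sp y \<le> G * vnorm sp x" "G \<ge> 0"
  shows "nsq x \<le> G^2 * nsq c"
proof (cases "x = 0")
  case True then show ?thesis using nsq_nonneg[of c] by (simp add: nsq_0_iff[of 0, THEN iffD2])
next
  case False
  have px: "vnorm sp x > 0" using False vnorm_0_iff vnorm_nonneg by (simp add: less_le)
  have "vnorm sp x ^2 \<le> vnorm sp c * (G * vnorm sp x)"
    using assms vnorm_nonneg[of c] by (simp add: vnorm_sq) (meson mult_left_mono order_trans)
  then have "vnorm sp x * vnorm sp x \<le> (G * vnorm sp c) * vnorm sp x" by (simp add: power2_eq_square algebra_simps)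
  then have "vnorm sp x \<le> G * vnorm sp c" using px by simp
  then have "vnorm sp x ^2 \<le> (G * vnorm sp c)^2" using vnorm_nonneg by (simp add: power_mono)
  then show ?thesis by (simp add: vnorm_sq power_mult_distrib)
qed

lemma Lpos_bound:
  fixes n k :: nat
  assumes "c \<in> W (of_nat k)" "0 < n"
  shows "nsq (L (int n) c) \<le> (2 * real k ^ 2 + K * real n ^ 2 * real k) * nsq c"
  using assms
proof (induct k arbitrary: c rule: less_induct)
  case (less k c)
  define x where "x = L (int n) c"
  have xW: "x \<in> W (of_int (int k - int n))" using L_W[of c "int k" "int n"] less.prems by (simp add: x_def)
  have Fnn: "0 \<le> (2 * real k ^ 2 + K * real n ^ 2 * real k) * nsq c"
    using K_nonneg nsq_nonneg by simp
  show ?case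
  proof (cases "k < n")
    case True
    then have "x = 0" using W_neg[OF xW] by simp
    then show ?thesis using Fnn by (simp add: x_def[symmetric] nsq_0_iff[of 0, THEN iffD2])
  next
    case False
    define k' where "k' = k - n"
    have kk: "k = k' + n" using False by (simp add: k'_def)
    have xW': "x \<in> W (of_nat k')" using xW kk by simp
    have IH: "nsq (L (int n) x) \<le> (2 * real k' ^ 2 + K * real n ^ 2 * real k') * nsq x"
      using less.hyps[of k' x] xW' less.prems kk by simp
    define G2 where "G2 = 2 * real k' ^ 2 + K * real n ^ 2 * real k' + 2 * real n * real k' + K * real n ^ 3"
    have id: "nsq (L (- int n) x) = nsq (L (int n) x) + (2 * real n * real k' + Re cc / 12 * real_of_int (int n^3 - int n)) * nsq x"
      using nsq_Lneg[of x "int k'" "int n"] xW' by simp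
    have t0: "real n \<le> real n ^ 3"
    proof -
      have "1 \<le> real n ^ 2" using less.prems(2) by (simp add: one_le_power)
      then have "real n * 1 \<le> real n * real n ^ 2" by (intro mult_left_mono) auto
      then show ?thesis by (simp add: power3_eq_cube power2_eq_square)
    qed
    have tb: "Re cc / 12 * real_of_int (int n^3 - int n) \<le> K * real n ^ 3"
    proof -
      have eq: "real_of_int (int n^3 - int n) = real n ^ 3 - real n" by simp
      have m1: "Re cc / 12 * (real n ^ 3 - real n) \<le> K * (real n ^ 3 - real n)"
        using t0 by (intro mult_right_mono) (auto simp: K_def)
      have m2: "K * (real n ^ 3 - real n) \<le> K * real n ^ 3"
        using K_nonneg by (simp add: mult_left_mono)
      show ?thesis unfolding eq using m1 m2 by (rule order_trans)
    qed
    have nL: "nsq (L (- int n) x) \<le> G2 * nsq x"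
    proof -
      have "nsq (L (- int n) x) \<le> (2 * real k' ^ 2 + K * real n ^ 2 * real k') * nsq x
          + (2 * real n * real k' + K * real n ^ 3) * nsq x"
        using id IH tb nsq_nonneg[of x] by (smt (verit) mult_right_mono)
      then show ?thesis by (simp add: G2_def algebra_simps)
    qed
    have G2nn: "G2 \<ge> 0" unfolding G2_def using K_nonneg by (intro add_nonneg_nonneg mult_nonneg_nonneg) auto
    have a1: "nsq x \<le> vnorm sp c * vnorm sp (L (- int n) x)"
    proof -
      have "sp c (L (- int n) x) = sp (L (int n) c) x" using L_adj[of c "- int n" x] by simp
      then have "nsq x = Re (sp c (L (- int n) x))" by (simp add: nsq_def x_def)
      then show ?thesis using Re_sp_le by simp
    qed
    have a2: "vnorm sp (L (- int n) x) \<le> sqrt G2 * vnorm sp x"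
      using nL by (simp add: vnorm_nsq real_sqrt_mult[symmetric])
    have "nsq x \<le> (sqrt G2)^2 * nsq c" by (rule nsq_le_from_sp[OF a1 a2]) (simp add: G2nn)
    then have b1: "nsq x \<le> G2 * nsq c" using G2nn by simp
    have "G2 \<le> 2 * real k ^ 2 + K * real n ^ 2 * real k"
    proof -
      have "2 * real k ^ 2 + K * real n ^ 2 * real k - G2 = 2 * real n * real k' + 2 * real n ^ 2"
        unfolding G2_def kk by (simp add: algebra_simps power2_eq_square power3_eq_cube)
      then show ?thesis by (smt (verit) of_nat_0_le_iff mult_nonneg_nonneg zero_le_power2)
    qed
    then have "G2 * nsq c \<le> (2 * real k ^ 2 + K * real n ^ 2 * real k) * nsq c"
      using nsq_nonneg by (simp add: mult_right_mono)
    then show ?thesis using b1 by (simp add: x_def)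
  qed
qed

end

context suv
begin

lemma cube_term: "0 < n \<Longrightarrow> Re cc / 12 * real_of_int (int n^3 - int n) \<le> K * real n ^ 3"
proof -
  assume n: "0 < n"
  have t0: "real n \<le> real n ^ 3"
  proof -
    have "1 \<le> real n ^ 2" using n by (simp add: one_le_power)
    then have "real n * 1 \<le> real n * real n ^ 2" by (intro mult_left_mono) auto
    then show ?thesis by (simp add: power3_eq_cube power2_eq_square)
  qed
  have eq: "real_of_int (int n^3 - int n) = real n ^ 3 - real n" by simp
  have m1: "Re cc / 12 * (real n ^ 3 - real n) \<le> K * (real n ^ 3 - real n)"
    using t0 by (intro mult_right_mono) (auto simp: K_def)
  have m2: "K * (real n ^ 3 - real n) \<le> K * real n ^ 3"
    using K_nonneg by (simp add: mult_left_mono)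
  show ?thesis unfolding eq using m1 m2 by (rule order_trans)
qed

lemma poly_bd:
  fixes p q K' :: real
  assumes p0: "0 \<le> p" and q0: "0 \<le> q" and K0: "0 \<le> K'"
  shows "2*q^2 + K'*p^2*q + 2*p*q + K'*p^3 \<le> (4 + 2*K') * ((1+p)^3 * (1+q)^2)"
proof -
  define u v where "u = 1 + p" and "v = 1 + q"
  have u1: "1 \<le> u" and v1: "1 \<le> v" using p0 q0 by (auto simp: u_def v_def)
  have pu: "p \<le> u" and qv: "q \<le> v" by (auto simp: u_def v_def)
  have u3: "1 \<le> u^3" and v2: "1 \<le> v^2" using u1 v1 by (auto intro: one_le_power)
  have "u^1 \<le> u^3" using u1 by (intro power_increasing) auto
  then have p1: "p \<le> u^3" using pu by simp
  have "p^2 \<le> u^2" using p0 pu by (intro power_mono) auto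
  moreover have "u^2 \<le> u^3" using u1 by (intro power_increasing) auto
  ultimately have p2: "p^2 \<le> u^3" by linarith
  have p3: "p^3 \<le> u^3" using p0 pu by (intro power_mono) auto
  have "v^1 \<le> v^2" using v1 by (intro power_increasing) auto
  then have q1: "q \<le> v^2" using qv by simp
  have q2: "q^2 \<le> v^2" using q0 qv by (intro power_mono) auto
  define M where "M = u^3 * v^2"
  have t1: "q^2 \<le> M"
  proof -
    have "1 * v^2 \<le> u^3 * v^2" using u3 by (intro mult_right_mono) auto
    then show ?thesis using q2 by (simp add: M_def)
  qed
  have t2: "p^2*q \<le> M" unfolding M_def using p2 q1 q0 u3 u1 by (intro mult_mono) auto
  have t3: "p*q \<le> M" unfolding M_def using p1 q1 q0 u3 u1 by (intro mult_mono) auto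
  have t4: "p^3 \<le> M"
  proof -
    have "p^3 * 1 \<le> u^3 * v^2" using p3 v2 u3 p0 u1 by (intro mult_mono) auto
    then show ?thesis by (simp add: M_def)
  qed
  have k2: "K' * (p^2*q) \<le> K' * M" using t2 K0 by (rule mult_left_mono)
  have k4: "K' * p^3 \<le> K' * M" using t4 K0 by (rule mult_left_mono)
  have "2*q^2 + K'*p^2*q + 2*p*q + K'*p^3 \<le> 2*M + K'*M + 2*M + K'*M"
    using t1 t3 k2 k4 by (simp add: mult.assoc)
  also have "\<dots> = (4 + 2*K') * M" by (simp add: algebra_simps)
  finally show ?thesis by (simp add: M_def u_def v_def)
qed

definition B where "B = 4 + 2 * K"
lemma B_pos: "B > 0" using K_nonneg by (simp add: B_def)

lemma L_hom_bound:
  assumes c: "c \<in> W (of_nat k)"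
  shows "nsq (L m c) \<le> B * ((1 + real_of_int \<bar>m\<bar>)^3 * (1 + real k)^2) * nsq c"
proof -
  have PB: "\<And>p. 0 \<le> p \<Longrightarrow> 2*real k^2 + K*p^2*real k + 2*p*real k + K*p^3 \<le> B * ((1+p)^3 * (1+real k)^2)"
    unfolding B_def using K_nonneg by (intro poly_bd) auto
  have nn: "0 \<le> nsq c" by (rule nsq_nonneg)
  consider "m > 0" | "m = 0" | "m < 0" by linarith
  then show ?thesis
  proof cases
    case 1
    define n where "n = nat m"
    have m: "m = int n" "0 < n" using 1 by (auto simp: n_def)
    have "nsq (L m c) \<le> (2 * real k ^ 2 + K * real n ^ 2 * real k) * nsq c"
      using Lpos_bound[OF c m(2)] m by simp
    also have "\<dots> \<le> (2*real k^2 + K*real n^2*real k + 2*real n*real k + K*real n^3) * nsq c"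
      using nn K_nonneg by (intro mult_right_mono) auto
    also have "\<dots> \<le> B * ((1 + real n)^3 * (1 + real k)^2) * nsq c"
      using PB[of "real n"] nn by (intro mult_right_mono) auto
    finally show ?thesis using m by simp
  next
    case 2
    have "L m c = sc (of_nat k) c" using c 2 by (simp add: W_def)
    then have "nsq (L m c) = (real k)^2 * nsq c" by (simp add: nsq_sc)
    also have "\<dots> \<le> (2*real k^2 + K*0^2*real k + 2*0*real k + K*0^3) * nsq c"
      using nn by (intro mult_right_mono) auto
    also have "\<dots> \<le> B * ((1 + 0)^3 * (1 + real k)^2) * nsq c"
      using PB[of 0] nn by (intro mult_right_mono) auto
    finally show ?thesis using 2 by simp
  next
    case 3
    define n where "n = nat (- m)"
    have m: "m = - int n" "0 < n" using 3 by (auto simp: n_def)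
    have id: "nsq (L (- int n) c) = nsq (L (int n) c) + (2 * real n * real k + Re cc / 12 * real_of_int (int n^3 - int n)) * nsq c"
      using nsq_Lneg[of c "int k" "int n"] c by simp
    have a1: "nsq (L (int n) c) \<le> (2 * real k ^ 2 + K * real n ^ 2 * real k) * nsq c"
      using Lpos_bound[OF c m(2)] by simp
    have a2: "(Re cc / 12 * real_of_int (int n^3 - int n)) * nsq c \<le> (K * real n ^ 3) * nsq c"
      using cube_term[OF m(2)] nn by (rule mult_right_mono)
    have id': "nsq (L m c) = nsq (L (int n) c) + (2 * real n * real k) * nsq c + (Re cc / 12 * real_of_int (int n^3 - int n)) * nsq c"
      unfolding m(1) id distrib_right by (simp only: add.assoc)
    have r: "(2*real k^2 + K*real n^2*real k + 2*real n*real k + K*real n^3) * nsq c = (2 * real k ^ 2 + K * real n ^ 2 * real k) * nsq c + (2 * real n * real k) * nsq c + (K * real n ^ 3) * nsq c"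
      by (simp add: algebra_simps)
    have "nsq (L m c) \<le> (2*real k^2 + K*real n^2*real k + 2*real n*real k + K*real n^3) * nsq c"
      using id' a1 a2 r by linarith
    also have "\<dots> \<le> B * ((1 + real n)^3 * (1 + real k)^2) * nsq c"
      using PB[of "real n"] nn by (intro mult_right_mono) auto
    finally show ?thesis using m by simp
  qed
qed

abbreviation Vl where "Vl \<equiv> Vle sc Y \<nu>"

lemma hc_sumf: "hc (sum f I) k = (\<Sum>i\<in>I. hc (f i) k)"
  by (induct I rule: infinite_finite_induct) (auto simp: hc_zero hc_add)

lemma hc_Wint: assumes "x \<in> W (of_int w)" "hc x k \<noteq> 0" shows "int k = w"
proof -
  have x0: "x \<noteq> 0" using assms hc_zero by auto
  obtain n :: nat where n: "(of_int w :: complex) = of_nat n" using W_nat[OF assms(1) x0] by blast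
  then have wn: "w = int n" by (metis of_int_eq_iff of_int_of_nat_eq)
  have "x \<in> W (of_nat n)" using assms(1) n by simp
  from hc_hom[OF this] assms(2) have "k = n" by (auto split: if_splits)
  then show ?thesis using wn by simp
qed

lemma Vle_sumI:
  assumes "finite I" "\<And>i. i \<in> I \<Longrightarrow> f i \<in> W (of_int (w i))" "\<And>i. i \<in> I \<Longrightarrow> w i \<le> n"
  shows "sum f I \<in> Vl n"
proof -
  have "int k \<le> n" if "hc (sum f I) k \<noteq> 0" for k
  proof -
    from that have "(\<Sum>i\<in>I. hc (f i) k) \<noteq> 0" by (simp add: hc_sumf)
    then obtain i where i: "i \<in> I" "hc (f i) k \<noteq> 0" by (meson sum.neutral)
    then have "int k = w i" using hc_Wint assms(2) by blast
    then show ?thesis using assms(3) i by simp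
  qed
  then show ?thesis by (simp add: Vle_def)
qed

lemma Vle_D: "b \<in> Vl n \<Longrightarrow> hc b k \<noteq> 0 \<Longrightarrow> int k \<le> n" by (simp add: Vle_def)

lemma nsq_sumW:
  assumes "finite I" "\<And>i. i \<in> I \<Longrightarrow> f i \<in> W (of_int (w i))" "inj_on w I"
  shows "nsq (sum f I) = (\<Sum>i\<in>I. nsq (f i))"
proof (rule nsq_pyth[OF assms(1)])
  fix i j assume "i \<in> I" "j \<in> I" "i \<noteq> j"
  then show "sp (f i) (f j) = 0" using assms W_orth by (meson inj_on_contraD)
qed

lemma hc_Wi: "hc b k \<in> W (of_int (int k))" using hc_W[of b k] by simp

lemma nsq_hc: "nsq b = (\<Sum>k\<in>{k. hc b k \<noteq> 0}. nsq (hc b k))"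
proof -
  have "nsq b = nsq (sum (hc b) {k. hc b k \<noteq> 0})" using hc_sum[of b] by simp
  also have "\<dots> = (\<Sum>k\<in>{k. hc b k \<noteq> 0}. nsq (hc b k))"
    by (rule nsq_sumW[where w=int]) (auto simp: hc_fin hc_W)
  finally show ?thesis .
qed

lemma shift_Vle:
  assumes mh: "module_hom sc sc T" and TW: "\<And>c w. c \<in> W (of_int w) \<Longrightarrow> T c \<in> W (of_int (w + j))"
    and b: "b \<in> Vl n"
  shows "T b \<in> Vl (n + j)" and "nsq (T b) = (\<Sum>k\<in>{k. hc b k \<noteq> 0}. nsq (T (hc b k)))"
proof -
  have TWk: "\<And>k. T (hc b k) \<in> W (of_int (int k + j))" using TW hc_Wi by blast
  have TWk': "\<And>k. T (hc b k) \<in> W (of_nat k + of_int j)" using TWk by simp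
  have e: "T b = (\<Sum>k\<in>{k. hc b k \<noteq> 0}. T (hc b k))"
    using hc_sum[of b] module_hom.sum[OF mh] by metis
  show "T b \<in> Vl (n + j)" unfolding e
    by (rule Vle_sumI[where w="\<lambda>k. int k + j"]) (auto simp: hc_fin intro: TWk TWk' Vle_D[OF b])
  show "nsq (T b) = (\<Sum>k\<in>{k. hc b k \<noteq> 0}. nsq (T (hc b k)))" unfolding e
    by (rule nsq_sumW[where w="\<lambda>k. int k + j"]) (auto simp: hc_fin inj_on_def intro: TWk TWk')
qed

lemma shift_bound:
  assumes mh: "module_hom sc sc T" and TW: "\<And>c w. c \<in> W (of_int w) \<Longrightarrow> T c \<in> W (of_int (w + j))"
    and b: "b \<in> Vl n" and bd: "\<And>k. hc b k \<noteq> 0 \<Longrightarrow> nsq (T (hc b k)) \<le> \<beta> * nsq (hc b k)"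
  shows "nsq (T b) \<le> \<beta> * nsq b"
proof -
  have "nsq (T b) = (\<Sum>k\<in>{k. hc b k \<noteq> 0}. nsq (T (hc b k)))" by (rule shift_Vle(2)[OF mh TW b])
  also have "\<dots> \<le> (\<Sum>k\<in>{k. hc b k \<noteq> 0}. \<beta> * nsq (hc b k))" by (intro sum_mono) (simp add: bd)
  also have "\<dots> = \<beta> * nsq b" by (simp add: nsq_hc[of b] sum_distrib_left)
  finally show ?thesis .
qed

lemma mh_L: "module_hom sc sc (L m)" unfolding Lop_def by (rule mhY)

lemma L_Wi: "c \<in> W (of_int w) \<Longrightarrow> L m c \<in> W (of_int (w + - m))" using L_W by simp

lemma L_Vle: "b \<in> Vl n \<Longrightarrow> L m b \<in> Vl (n - m)"
  using shift_Vle(1)[OF mh_L L_Wi] by simp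

lemma L_Vle_bound:
  assumes b: "b \<in> Vl n"
  shows "vnorm sp (L m b) \<le> sqrt B * ((1 + real_of_int \<bar>m\<bar>) * sqrt (1 + real_of_int \<bar>m\<bar>)) * (1 + real_of_int \<bar>n\<bar>) * vnorm sp b"
proof -
  define \<beta> where "\<beta> = B * ((1 + real_of_int \<bar>m\<bar>)^3 * (1 + real_of_int \<bar>n\<bar>)^2)"
  have "nsq (L m b) \<le> \<beta> * nsq b"
  proof (rule shift_bound[OF mh_L L_Wi b])
    fix k assume k: "hc b k \<noteq> 0"
    have "int k \<le> n" using Vle_D[OF b k] .
    then have kn: "1 + real k \<le> 1 + real_of_int \<bar>n\<bar>" by linarith
    have "nsq (L m (hc b k)) \<le> B * ((1 + real_of_int \<bar>m\<bar>)^3 * (1 + real k)^2) * nsq (hc b k)"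
      by (rule L_hom_bound[OF hc_W])
    also have "\<dots> \<le> \<beta> * nsq (hc b k)"
      unfolding \<beta>_def using kn B_pos nsq_nonneg
      by (intro mult_right_mono mult_left_mono power_mono) auto
    finally show "nsq (L m (hc b k)) \<le> \<beta> * nsq (hc b k)" .
  qed
  then have "sqrt (nsq (L m b)) \<le> sqrt \<beta> * sqrt (nsq b)" by (simp add: real_sqrt_mult[symmetric])
  moreover have "sqrt \<beta> = sqrt B * ((1 + real_of_int \<bar>m\<bar>) * sqrt (1 + real_of_int \<bar>m\<bar>)) * (1 + real_of_int \<bar>n\<bar>)"
  proof -
    have "(1 + real_of_int \<bar>m\<bar>)^3 = ((1 + real_of_int \<bar>m\<bar>) * sqrt (1 + real_of_int \<bar>m\<bar>))^2"
      by (simp add: power_mult_distrib power3_eq_cube power2_eq_square)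
    then show ?thesis unfolding \<beta>_def by (simp add: real_sqrt_mult)
  qed
  ultimately show ?thesis by (simp add: vnorm_nsq)
qed

end


locale suvp = suv sc Y \<Omega> \<nu> sp star
  for sc :: "complex \<Rightarrow> 'v::ab_group_add \<Rightarrow> 'v" and Y \<Omega> \<nu> sp star +
  fixes a :: 'v and d :: nat
  assumes prim: "primary sc Y \<nu> a d" and d1: "d \<noteq> 1"
begin

lemma aW: "a \<in> W (of_nat d)" using prim by (simp add: primary_def eigsp_W)
lemma La_pos: "k > 0 \<Longrightarrow> L k a = 0" using prim by (simp add: primary_def)

lemma comm_Y:
  "Y \<nu> p (Y a q c) - Y a q (Y \<nu> p c) = sc (of_int (p * int d - p - q)) (Y a (p + q - 1) c)"
proof -
  have ev: "\<forall>\<^sub>F M in sequentially.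
        (\<Sum>i<M. sc ((of_int p) gchoose i) (Y (Y \<nu> (0 + int i) a) (p + q - int i) c)) =
        (\<Sum>i<M. sc ((-1)^i * ((of_int 0) gchoose i))
            (Y \<nu> (p + 0 - int i) (Y a (q + int i) c)
             - sc (sgn_pow 0) (Y a (q + 0 - int i) (Y \<nu> (p + int i) c))))"
    using borch by blast
  then obtain N where N: "\<And>M. M \<ge> N \<Longrightarrow>
        (\<Sum>i<M. sc ((of_int p) gchoose i) (Y (Y \<nu> (0 + int i) a) (p + q - int i) c)) =
        (\<Sum>i<M. sc ((-1)^i * ((of_int 0) gchoose i))
            (Y \<nu> (p + 0 - int i) (Y a (q + int i) c)
             - sc (sgn_pow 0) (Y a (q + 0 - int i) (Y \<nu> (p + int i) c))))"
    unfolding eventually_sequentially by blast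
  define M where "M = N + 2"
  define f where "f i = sc ((of_int p) gchoose i) (Y (Y \<nu> (0 + int i) a) (p + q - int i) c)" for i
  define g where "g i = sc ((-1)^i * ((of_int 0) gchoose i))
            (Y \<nu> (p + 0 - int i) (Y a (q + int i) c)
             - sc (sgn_pow 0) (Y a (q + 0 - int i) (Y \<nu> (p + int i) c)))" for i
  have E: "sum f {..<M} = sum g {..<M}" using N[of M] by (simp add: M_def f_def g_def)
  have f0: "f i = 0" if "i \<ge> 2" for i
  proof -
    have "Y \<nu> (int i) = L (int i - 1)" by (simp add: L_def')
    moreover have "L (int i - 1) a = 0" using that by (intro La_pos) auto
    ultimately show ?thesis by (simp add: f_def Y1_0)
  qed
  have "sum f {..<M} = sum f {..<2}"
    using f0 by (intro sum.mono_neutral_right) (auto simp: M_def)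
  also have "\<dots> = f 0 + f 1" by (simp add: numeral_2_eq_2)
  also have "f 0 = - sc (of_int (p + q)) (Y a (p + q - 1) c)"
  proof -
    have "Y \<nu> 0 = L (-1)" by (simp add: L_def')
    then show ?thesis using deriv by (simp add: f_def)
  qed
  also have "f 1 = sc (of_int p * of_nat d) (Y a (p + q - 1) c)"
  proof -
    have "Y \<nu> 1 a = sc (of_nat d) a" using aW by (simp add: W_def L_def')
    then show ?thesis by (simp add: f_def Y1_sc)
  qed
  finally have Lhs0: "sum f {..<M} = - sc (of_int (p + q)) (Y a (p + q - 1) c) + sc (of_int p * of_nat d) (Y a (p + q - 1) c)" .
  have "sc (of_int (p * int d - p - q)) (Y a (p + q - 1) c) = sc (of_int p * of_nat d - of_int (p+q)) (Y a (p + q - 1) c)"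
    by simp
  also have "\<dots> = sc (of_int p * of_nat d) (Y a (p + q - 1) c) - sc (of_int (p+q)) (Y a (p + q - 1) c)"
    by (rule vs.scale_left_diff_distrib)
  finally have Lhs: "sum f {..<M} = sc (of_int (p * int d - p - q)) (Y a (p + q - 1) c)"
    using Lhs0 by simp
  have g0: "g i = 0" if "i \<ge> 1" for i using that by (simp add: g_def gbinomial_0_left)
  have "sum g {..<M} = sum g {..<1}"
    using g0 by (intro sum.mono_neutral_right) (auto simp: M_def)
  also have "\<dots> = Y \<nu> p (Y a q c) - Y a q (Y \<nu> p c)" by (simp add: g_def sgn_pow_def)
  finally show ?thesis using E Lhs by simp
qed

abbreviation A where "A n \<equiv> pmode sc Y \<nu> a n"

lemma A_eq: "A n = Y a (n + int d - 1)" using pmode_hom[OF aW] by (intro ext) simp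

lemma comm_A: "L m (A n c) - A n (L m c) = sc (of_int ((int d - 1) * m - n)) (A (m + n) c)"
proof -
  have "L m = Y \<nu> (m + 1)" by (rule L_def')
  then show ?thesis using comm_Y[of "m + 1" "n + int d - 1" c] unfolding A_eq
    by (simp add: algebra_simps)
qed

lemma mh_A: "module_hom sc sc (A n)" unfolding A_eq by (rule mhY)

lemma A_Wi: assumes "c \<in> W (of_int w)" shows "A n c \<in> W (of_int (w + - n))"
proof -
  have "L 0 (A n c) - A n (L 0 c) = sc (of_int (- n)) (A n c)" using comm_A[of 0 n c] by simp
  moreover have "A n (L 0 c) = sc (of_int w) (A n c)"
    using assms module_hom.scale[OF mh_A] by (simp add: W_def)
  ultimately have "L 0 (A n c) = sc (of_int w) (A n c) + sc (of_int (- n)) (A n c)"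
    by (metis diff_eq_eq add.commute)
  then have "L 0 (A n c) = sc (of_int w + of_int (- n)) (A n c)"
    by (simp only: vs.scale_left_distrib)
  then show ?thesis by (simp add: W_def)
qed

lemma A_Vle: "b \<in> Vl n \<Longrightarrow> A m b \<in> Vl (n - m)"
  using shift_Vle(1)[OF mh_A A_Wi] by simp

lemma A_m: assumes "m \<noteq> 0"
  shows "A m c = sc (1 / of_int ((int d - 1) * m)) (L m (A 0 c) - A 0 (L m c))"
proof -
  have nz: "(of_int ((int d - 1) * m) :: complex) \<noteq> 0" using assms d1 by simp
  have "L m (A 0 c) - A 0 (L m c) = sc (of_int ((int d - 1) * m)) (A m c)" using comm_A[of m 0 c] by simp
  then show ?thesis using nz by simp
qed

end


context suv
begin

lemma Vl_zero: "0 \<in> Vl n" by (simp add: Vle_def hc_zero)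

lemma Vl_sc: "c \<in> Vl n \<Longrightarrow> sc t c \<in> Vl n"
  by (auto simp: Vle_def hc_sc)

lemma opn_le_bound:
  assumes "\<And>b. b \<in> Vl n \<Longrightarrow> vnorm sp (R b) \<le> Z * vnorm sp b" "Z \<ge> 0"
  shows "opnorm_le sc Y \<nu> sp R n \<le> ereal Z"
  unfolding opnorm_le_def
proof (rule Sup_least)
  fix y assume "y \<in> {ereal (vnorm sp (R b)) |b. b \<in> Vl n \<and> vnorm sp b \<le> 1}"
  then obtain b where b: "y = ereal (vnorm sp (R b))" "b \<in> Vl n" "vnorm sp b \<le> 1" by blast
  have "vnorm sp (R b) \<le> Z * vnorm sp b" using assms b by blast
  also have "\<dots> \<le> Z" using b assms(2) by (simp add: mult_left_le)
  finally show "y \<le> ereal Z" using b by simp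
qed

lemma opn_bound:
  assumes "\<And>b. vnorm sp (R b) \<le> Z * vnorm sp b" "Z \<ge> 0"
  shows "opnorm sp R \<le> ereal Z"
  unfolding opnorm_def
proof (rule Sup_least)
  fix y assume "y \<in> {ereal (vnorm sp (R b)) |b. vnorm sp b \<le> 1}"
  then obtain b where b: "y = ereal (vnorm sp (R b))" "vnorm sp b \<le> 1" by blast
  have "vnorm sp (R b) \<le> Z * vnorm sp b" using assms b by blast
  also have "\<dots> \<le> Z" using b assms(2) by (simp add: mult_left_le)
  finally show "y \<le> ereal Z" using b by simp
qed

lemma homog_0: assumes "\<And>t x. R (sc t x) = sc t (R x)" shows "R 0 = 0"
proof -
  have "R 0 = R (sc 0 0)" by simp
  also have "\<dots> = sc 0 (R 0)" by (rule assms)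
  finally show ?thesis by simp
qed

lemma opn_le_nonneg:
  assumes "\<And>t x. R (sc t x) = sc t (R x)"
  shows "0 \<le> opnorm_le sc Y \<nu> sp R n"
proof -
  have "ereal 0 \<in> {ereal (vnorm sp (R b)) |b. b \<in> Vl n \<and> vnorm sp b \<le> 1}"
    using homog_0[OF assms] Vl_zero by (intro CollectI exI[of _ 0]) simp
  then have "ereal 0 \<le> opnorm_le sc Y \<nu> sp R n" unfolding opnorm_le_def by (rule Sup_upper)
  then show ?thesis by (simp add: zero_ereal_def)
qed

lemma opn_nonneg:
  assumes "\<And>t x. R (sc t x) = sc t (R x)"
  shows "0 \<le> opnorm sp R"
proof -
  have "ereal 0 \<in> {ereal (vnorm sp (R b)) |b. vnorm sp b \<le> 1}"
    using homog_0[OF assms] by (intro CollectI exI[of _ 0]) simp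
  then have "ereal 0 \<le> opnorm sp R" unfolding opnorm_def by (rule Sup_upper)
  then show ?thesis by (simp add: zero_ereal_def)
qed

lemma unit_scale:
  assumes "c \<noteq> 0"
  shows "vnorm sp (sc (of_real (1 / vnorm sp c)) c) = 1"
proof -
  have p: "vnorm sp c > 0" using assms vnorm_0_iff vnorm_nonneg by (simp add: less_le)
  have "cmod (complex_of_real (1 / vnorm sp c)) = 1 / vnorm sp c" using p by (simp only: norm_of_real) simp
  then show ?thesis using p by (simp add: vnorm_sc)
qed

lemma opn_le_use:
  assumes eq: "opnorm_le sc Y \<nu> sp R n = ereal X" and h: "\<And>t x. R (sc t x) = sc t (R x)"
    and c: "c \<in> Vl n"
  shows "vnorm sp (R c) \<le> X * vnorm sp c"
proof (cases "c = 0")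
  case True then show ?thesis using homog_0[OF h] by simp
next
  case False
  define t where "t = 1 / vnorm sp c"
  have tp: "t > 0" using False vnorm_0_iff vnorm_nonneg by (simp add: t_def less_le)
  define b where "b = sc (of_real t) c"
  have b1: "vnorm sp b = 1" using unit_scale[OF False] by (simp add: b_def t_def)
  have bV: "b \<in> Vl n" using Vl_sc[OF c] by (simp add: b_def)
  have "ereal (vnorm sp (R b)) \<le> opnorm_le sc Y \<nu> sp R n"
    unfolding opnorm_le_def using b1 bV by (intro Sup_upper) auto
  then have "vnorm sp (R b) \<le> X" using eq by simp
  moreover have "vnorm sp (R b) = t * vnorm sp (R c)" using tp by (simp add: b_def h vnorm_sc)
  ultimately have "t * vnorm sp (R c) \<le> X" by simp
  then have "vnorm sp (R c) \<le> X / t" using tp by (simp add: field_simps)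
  then show ?thesis by (simp add: t_def)
qed

lemma opn_use:
  assumes eq: "opnorm sp R = ereal X" and h: "\<And>t x. R (sc t x) = sc t (R x)"
  shows "vnorm sp (R c) \<le> X * vnorm sp c"
proof (cases "c = 0")
  case True then show ?thesis using homog_0[OF h] by simp
next
  case False
  define t where "t = 1 / vnorm sp c"
  have tp: "t > 0" using False vnorm_0_iff vnorm_nonneg by (simp add: t_def less_le)
  define b where "b = sc (of_real t) c"
  have b1: "vnorm sp b = 1" using unit_scale[OF False] by (simp add: b_def t_def)
  have "ereal (vnorm sp (R b)) \<le> opnorm sp R"
    unfolding opnorm_def using b1 by (intro Sup_upper) auto
  then have "vnorm sp (R b) \<le> X" using eq by simp
  moreover have "vnorm sp (R b) = t * vnorm sp (R c)" using tp by (simp add: b_def h vnorm_sc)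
  ultimately have "t * vnorm sp (R c) \<le> X" by simp
  then have "vnorm sp (R c) \<le> X / t" using tp by (simp add: field_simps)
  then show ?thesis by (simp add: t_def)
qed

end



context suvp
begin

definition Acon where "Acon = 1 + 2 * sqrt B"
lemma Acon_ge1: "Acon \<ge> 1" using B_pos by (simp add: Acon_def)

lemma A_homog: "A n (sc t x) = sc t (A n x)" by (rule module_hom.scale[OF mh_A])

lemma core:
  assumes b: "b \<in> Vl n" and X: "X \<ge> 0" "\<And>c. c \<in> Vl n \<Longrightarrow> vnorm sp (A 0 c) \<le> X * vnorm sp c"
    and Z: "Z \<ge> 0" "\<And>c. c \<in> Vl (n - m) \<Longrightarrow> vnorm sp (A 0 c) \<le> Z * vnorm sp c"
  shows "vnorm sp (A m b) \<le> Acon * sqrt (1 + real_of_int \<bar>m\<bar>) * (1 + real_of_int \<bar>n\<bar>) * (X + Z) * vnorm sp b"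
proof (cases "m = 0")
  case True
  have "vnorm sp (A m b) \<le> X * vnorm sp b" using X b True by simp
  also have "\<dots> \<le> (X + Z) * vnorm sp b" using Z vnorm_nonneg by (simp add: mult_right_mono)
  also have "\<dots> = 1 * (X + Z) * vnorm sp b" by simp
  also have "\<dots> \<le> (Acon * sqrt (1 + real_of_int \<bar>m\<bar>) * (1 + real_of_int \<bar>n\<bar>)) * (X + Z) * vnorm sp b"
  proof (intro mult_right_mono)
    have "1 * 1 * 1 \<le> Acon * sqrt (1 + real_of_int \<bar>m\<bar>) * (1 + real_of_int \<bar>n\<bar>)"
      using Acon_ge1 True by (intro mult_mono) auto
    then show "1 \<le> Acon * sqrt (1 + real_of_int \<bar>m\<bar>) * (1 + real_of_int \<bar>n\<bar>)" by simp
  qed (use X Z vnorm_nonneg in auto)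
  finally show ?thesis by (simp add: mult.assoc)
next
  case False
  define S where "S = sqrt B * ((1 + real_of_int \<bar>m\<bar>) * sqrt (1 + real_of_int \<bar>m\<bar>)) * (1 + real_of_int \<bar>n\<bar>)"
  have S0: "S \<ge> 0" using B_pos by (simp add: S_def)
  define r where "r = real_of_int \<bar>(int d - 1) * m\<bar>"
  have rm: "real_of_int \<bar>m\<bar> \<le> r"
  proof -
    have "\<bar>int d - 1\<bar> \<ge> 1" using d1 by linarith
    then have "1 * \<bar>m\<bar> \<le> \<bar>int d - 1\<bar> * \<bar>m\<bar>" by (intro mult_right_mono) auto
    then have "\<bar>m\<bar> \<le> \<bar>(int d - 1) * m\<bar>" by (simp add: abs_mult)
    then have "real_of_int \<bar>m\<bar> \<le> real_of_int \<bar>(int d - 1) * m\<bar>" by (simp only: of_int_le_iff)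
    then show ?thesis by (simp only: r_def)
  qed
  have m1: "real_of_int \<bar>m\<bar> \<ge> 1" using False by linarith
  have rp: "r > 0" using rm m1 by linarith
  have AV: "A 0 b \<in> Vl n" using A_Vle[OF b, of 0] by simp
  have LV: "L m b \<in> Vl (n - m)" by (rule L_Vle[OF b])
  have t1: "vnorm sp (L m (A 0 b)) \<le> S * (X * vnorm sp b)"
  proof -
    have "vnorm sp (L m (A 0 b)) \<le> S * vnorm sp (A 0 b)"
      using L_Vle_bound[OF AV, of m] by (simp add: S_def)
    also have "\<dots> \<le> S * (X * vnorm sp b)" using X(2)[OF b] S0 by (rule mult_left_mono)
    finally show ?thesis .
  qed
  have t2: "vnorm sp (A 0 (L m b)) \<le> Z * (S * vnorm sp b)"
  proof -
    have "vnorm sp (A 0 (L m b)) \<le> Z * vnorm sp (L m b)" by (rule Z(2)[OF LV])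
    also have "\<dots> \<le> Z * (S * vnorm sp b)"
      using L_Vle_bound[OF b, of m] Z(1) by (intro mult_left_mono) (simp_all add: S_def)
    finally show ?thesis .
  qed
  have Ae: "A m b = sc (1 / of_int ((int d - 1) * m)) (L m (A 0 b) - A 0 (L m b))" by (rule A_m[OF False])
  have nq: "cmod (1 / (of_int ((int d - 1) * m) :: complex)) = 1 / r"
    unfolding r_def by (simp only: norm_divide norm_one norm_of_int of_int_abs)
  have "vnorm sp (A m b) = (1 / r) * vnorm sp (L m (A 0 b) - A 0 (L m b))"
    unfolding Ae vnorm_sc nq ..
  also have "\<dots> \<le> (1 / r) * (S * (X + Z) * vnorm sp b)"
  proof (rule mult_left_mono)
    have "vnorm sp (L m (A 0 b) - A 0 (L m b)) \<le> vnorm sp (L m (A 0 b)) + vnorm sp (A 0 (L m b))"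
      by (rule vnorm_tri_diff)
    also have "\<dots> \<le> S * (X * vnorm sp b) + Z * (S * vnorm sp b)" using t1 t2 by linarith
    also have "\<dots> = S * (X + Z) * vnorm sp b" by (simp add: algebra_simps)
    finally show "vnorm sp (L m (A 0 b) - A 0 (L m b)) \<le> S * (X + Z) * vnorm sp b" .
  qed (use rp in simp)
  also have "\<dots> = (S / r) * ((X + Z) * vnorm sp b)" by simp
  also have "\<dots> \<le> (Acon * sqrt (1 + real_of_int \<bar>m\<bar>) * (1 + real_of_int \<bar>n\<bar>)) * ((X + Z) * vnorm sp b)"
  proof (rule mult_right_mono)
    have q: "(1 + real_of_int \<bar>m\<bar>) / r \<le> 2" using rm m1 rp by (simp add: divide_le_eq)
    have "S / r = ((1 + real_of_int \<bar>m\<bar>) / r) * (sqrt B * sqrt (1 + real_of_int \<bar>m\<bar>) * (1 + real_of_int \<bar>n\<bar>))"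
      by (simp add: S_def)
    also have "\<dots> \<le> 2 * (sqrt B * sqrt (1 + real_of_int \<bar>m\<bar>) * (1 + real_of_int \<bar>n\<bar>))"
      using q B_pos by (intro mult_right_mono) auto
    also have "\<dots> \<le> Acon * sqrt (1 + real_of_int \<bar>m\<bar>) * (1 + real_of_int \<bar>n\<bar>)"
    proof -
      have "2 * sqrt B \<le> Acon" by (simp add: Acon_def)
      then have "2 * sqrt B * (sqrt (1 + real_of_int \<bar>m\<bar>) * (1 + real_of_int \<bar>n\<bar>)) \<le> Acon * (sqrt (1 + real_of_int \<bar>m\<bar>) * (1 + real_of_int \<bar>n\<bar>))"
        by (intro mult_right_mono) auto
      then show ?thesis by (simp add: mult.assoc)
    qed
    finally show "S / r \<le> Acon * sqrt (1 + real_of_int \<bar>m\<bar>) * (1 + real_of_int \<bar>n\<bar>)" .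
  qed (use X Z vnorm_nonneg in simp)
  finally show ?thesis by (simp add: mult.assoc)
qed

lemma part1:
  "opnorm_le sc Y \<nu> sp (A m) n
     \<le> ereal (Acon * sqrt (1 + real_of_int \<bar>m\<bar>) * (1 + real_of_int \<bar>n\<bar>))
        * (opnorm_le sc Y \<nu> sp (A 0) n + opnorm_le sc Y \<nu> sp (A 0) (n - m))"
proof -
  define P Q where "P = opnorm_le sc Y \<nu> sp (A 0) n" and "Q = opnorm_le sc Y \<nu> sp (A 0) (n - m)"
  define c0 where "c0 = Acon * sqrt (1 + real_of_int \<bar>m\<bar>) * (1 + real_of_int \<bar>n\<bar>)"
  have c0p: "c0 > 0" using Acon_ge1 by (simp add: c0_def)
  have P0: "0 \<le> P" and Q0: "0 \<le> Q" unfolding P_def Q_def using A_homog by (auto intro!: opn_le_nonneg)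
  show ?thesis unfolding P_def[symmetric] Q_def[symmetric] c0_def[symmetric]
  proof (cases "P = \<infinity> \<or> Q = \<infinity>")
    case True
    then have "P + Q = \<infinity>" using P0 Q0 by auto
    then have e: "ereal c0 * (P + Q) = \<infinity>" using c0p by simp
    show "opnorm_le sc Y \<nu> sp (A m) n \<le> ereal c0 * (P + Q)" unfolding e by simp
  next
    case False
    obtain X where PX: "P = ereal X" using P0 False by (cases P) auto
    obtain Z where QZ: "Q = ereal Z" using Q0 False by (cases Q) auto
    have X0: "X \<ge> 0" using P0 PX by simp
    have Z0: "Z \<ge> 0" using Q0 QZ by simp
    have "opnorm_le sc Y \<nu> sp (A m) n \<le> ereal (c0 * (X + Z))"
    proof (rule opn_le_bound)
      fix b assume b: "b \<in> Vl n"
      have "vnorm sp (A m b) \<le> Acon * sqrt (1 + real_of_int \<bar>m\<bar>) * (1 + real_of_int \<bar>n\<bar>) * (X + Z) * vnorm sp b"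
        by (rule core[OF b X0 _ Z0]) (use opn_le_use[OF PX[unfolded P_def] A_homog] opn_le_use[OF QZ[unfolded Q_def] A_homog] in auto)
      then show "vnorm sp (A m b) \<le> c0 * (X + Z) * vnorm sp b" by (simp add: c0_def)
    qed (use c0p X0 Z0 in simp)
    then show "opnorm_le sc Y \<nu> sp (A m) n \<le> ereal c0 * (P + Q)" using PX QZ by simp
  qed
qed

end


context suv
begin

abbreviation L0p where "L0p \<equiv> L0pow sc Y \<nu>"

lemma L0pow_alt:
  assumes "finite T" "{k. hc v k \<noteq> 0} \<subseteq> T"
  shows "L0p s v = (\<Sum>k\<in>T. sc (of_real ((real k + 1) powr (- s))) (hc v k))"
  unfolding L0pow_def using assms by (intro sum.mono_neutral_left) auto

lemma L0pow_sc: "L0p s (sc t x) = sc t (L0p s x)"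
proof -
  have f: "finite {k. hc x k \<noteq> 0}" by (rule hc_fin)
  have sub: "{k. hc (sc t x) k \<noteq> 0} \<subseteq> {k. hc x k \<noteq> 0}" by (auto simp: hc_sc)
  have "L0p s (sc t x) = (\<Sum>k\<in>{k. hc x k \<noteq> 0}. sc (of_real ((real k + 1) powr (- s))) (hc (sc t x) k))"
    by (rule L0pow_alt[OF f sub])
  also have "\<dots> = sc t (\<Sum>k\<in>{k. hc x k \<noteq> 0}. sc (of_real ((real k + 1) powr (- s))) (hc x k))"
    by (simp add: hc_sc vs.scale_sum_right mult.commute)
  also have "(\<Sum>k\<in>{k. hc x k \<noteq> 0}. sc (of_real ((real k + 1) powr (- s))) (hc x k)) = L0p s x"
    by (simp add: L0pow_def)
  finally show ?thesis .
qed

lemma L0pow_inv: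
  assumes s: "0 \<le> s" and c: "c \<in> Vl j"
  shows "\<exists>x. L0p s x = c \<and> vnorm sp x \<le> (1 + real_of_int \<bar>j\<bar>) powr s * vnorm sp c"
proof -
  define S where "S = {k. hc c k \<noteq> 0}"
  have fS: "finite S" unfolding S_def by (rule hc_fin)
  define e where "e k = (real k + 1) powr s" for k
  define x where "x = (\<Sum>k\<in>S. sc (of_real (e k)) (hc c k))"
  have hx: "hc x = (\<lambda>k. if k \<in> S then sc (of_real (e k)) (hc c k) else 0)"
    unfolding x_def by (rule hcomp_eq[OF fS]) (auto intro: W_sc hc_W)
  have sub: "{k. hc x k \<noteq> 0} \<subseteq> S" by (auto simp: hx)
  have "L0p s x = (\<Sum>k\<in>S. sc (of_real ((real k + 1) powr (- s))) (hc x k))"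
    by (rule L0pow_alt[OF fS sub])
  also have "\<dots> = (\<Sum>k\<in>S. hc c k)"
  proof (rule sum.cong[OF refl])
    fix k assume "k \<in> S"
    have "(real k + 1) powr (- s) * e k = 1" unfolding e_def powr_add[symmetric] by simp
    then have "(of_real ((real k + 1) powr (- s)) :: complex) * of_real (e k) = 1"
      by (metis of_real_mult of_real_1)
    then show "sc (of_real ((real k + 1) powr (- s))) (hc x k) = hc c k"
      using \<open>k \<in> S\<close> by (simp add: hx)
  qed
  also have "\<dots> = c" using hc_sum[of c] by (simp add: S_def)
  finally have L: "L0p s x = c" .
  have "nsq x = (\<Sum>k\<in>S. nsq (sc (of_real (e k)) (hc c k)))"
    unfolding x_def by (rule nsq_sumW[where w=int]) (auto simp: inj_on_def fS intro: W_sc hc_W)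
  also have "\<dots> = (\<Sum>k\<in>S. (e k)^2 * nsq (hc c k))" by (simp add: nsq_sc e_def)
  also have "\<dots> \<le> (\<Sum>k\<in>S. ((1 + real_of_int \<bar>j\<bar>) powr s)^2 * nsq (hc c k))"
  proof (rule sum_mono)
    fix k assume k: "k \<in> S"
    have "int k \<le> j" using c k by (simp add: Vle_def S_def)
    then have "real k + 1 \<le> 1 + real_of_int \<bar>j\<bar>" by linarith
    then have "e k \<le> (1 + real_of_int \<bar>j\<bar>) powr s" unfolding e_def using s by (intro powr_mono2) auto
    then have "(e k)^2 \<le> ((1 + real_of_int \<bar>j\<bar>) powr s)^2" by (intro power_mono) (auto simp: e_def)
    then show "(e k)^2 * nsq (hc c k) \<le> ((1 + real_of_int \<bar>j\<bar>) powr s)^2 * nsq (hc c k)"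
      using nsq_nonneg by (rule mult_right_mono)
  qed
  also have "\<dots> = ((1 + real_of_int \<bar>j\<bar>) powr s)^2 * nsq c"
    by (simp add: nsq_hc[of c] sum_distrib_left S_def)
  finally have "nsq x \<le> ((1 + real_of_int \<bar>j\<bar>) powr s)^2 * nsq c" .
  then have "sqrt (nsq x) \<le> sqrt (((1 + real_of_int \<bar>j\<bar>) powr s)^2 * nsq c)" by (rule real_sqrt_le_mono)
  then have "vnorm sp x \<le> (1 + real_of_int \<bar>j\<bar>) powr s * vnorm sp c"
    by (simp add: vnorm_nsq real_sqrt_mult)
  with L show ?thesis by blast
qed

end



context suvp
begin

lemma A0_from_N:
  assumes N: "\<And>x. vnorm sp (A 0 (L0p s x)) \<le> N * vnorm sp x" "N \<ge> 0" and s: "s \<ge> 0"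
    and c: "c \<in> Vl j"
  shows "vnorm sp (A 0 c) \<le> N * (1 + real_of_int \<bar>j\<bar>) powr s * vnorm sp c"
proof -
  obtain x where x: "L0p s x = c" "vnorm sp x \<le> (1 + real_of_int \<bar>j\<bar>) powr s * vnorm sp c"
    using L0pow_inv[OF s c] by blast
  have "vnorm sp (A 0 c) \<le> N * vnorm sp x" using N(1)[of x] x(1) by simp
  also have "\<dots> \<le> N * ((1 + real_of_int \<bar>j\<bar>) powr s * vnorm sp c)" using x(2) N(2) by (rule mult_left_mono)
  finally show ?thesis by (simp add: mult.assoc)
qed

definition G where "G N s m = 2 * Acon * N * (1 + real_of_int \<bar>m\<bar>) powr (s + 1/2)"

lemma A_hom_bound:
  assumes N: "\<And>x. vnorm sp (A 0 (L0p s x)) \<le> N * vnorm sp x" "N \<ge> 0" and s: "s \<ge> 0"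
    and c: "c \<in> W (of_nat k)"
  shows "vnorm sp (A m c) \<le> G N s m * (1 + real k) powr (s + 1) * vnorm sp c"
proof -
  define a q where "a = 1 + real_of_int \<bar>m\<bar>" and "q = 1 + real k"
  have a1: "a \<ge> 1" and q1: "q \<ge> 1" by (auto simp: a_def q_def)
  have cV: "c \<in> Vl (int k)" using hc_hom[OF c] by (auto simp: Vle_def split: if_splits)
  define X where "X = N * q powr s"
  define Z where "Z = N * q powr s * a powr s"
  have X0: "X \<ge> 0" and Z0: "Z \<ge> 0" using N(2) by (auto simp: X_def Z_def)
  have Xb: "vnorm sp (A 0 c') \<le> X * vnorm sp c'" if "c' \<in> Vl (int k)" for c'
    using A0_from_N[OF N s that] by (simp add: X_def q_def)
  have Zb: "vnorm sp (A 0 c') \<le> Z * vnorm sp c'" if "c' \<in> Vl (int k - m)" for c'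
  proof -
    have "vnorm sp (A 0 c') \<le> N * (1 + real_of_int \<bar>int k - m\<bar>) powr s * vnorm sp c'"
      by (rule A0_from_N[OF N s that])
    also have "\<dots> \<le> Z * vnorm sp c'"
    proof (rule mult_right_mono)
      have "1 + real_of_int \<bar>int k - m\<bar> \<le> q * a"
      proof -
        have f1: "real_of_int \<bar>int k - m\<bar> \<le> real k + real_of_int \<bar>m\<bar>" by linarith
        have f2: "0 \<le> real k * real_of_int \<bar>m\<bar>" by simp
        have eq: "q * a = 1 + real k + real_of_int \<bar>m\<bar> + real k * real_of_int \<bar>m\<bar>"
          by (simp add: q_def a_def algebra_simps)
        show ?thesis using f1 f2 eq by linarith
      qed
      then have "(1 + real_of_int \<bar>int k - m\<bar>) powr s \<le> (q * a) powr s" using s by (intro powr_mono2) auto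
      also have "\<dots> = q powr s * a powr s" using a1 q1 by (simp add: powr_mult)
      finally show "N * (1 + real_of_int \<bar>int k - m\<bar>) powr s \<le> Z"
        using N(2) by (simp add: Z_def mult.assoc mult_left_mono)
    qed (rule vnorm_nonneg)
    finally show ?thesis .
  qed
  have "vnorm sp (A m c) \<le> Acon * sqrt a * (1 + real_of_int \<bar>int k\<bar>) * (X + Z) * vnorm sp c"
    using core[OF cV X0 Xb Z0 Zb] by (simp add: a_def)
  also have "\<dots> = Acon * sqrt a * q * (N * q powr s) * (1 + a powr s) * vnorm sp c"
    by (simp add: q_def X_def Z_def algebra_simps)
  also have "\<dots> \<le> Acon * sqrt a * q * (N * q powr s) * (2 * a powr s) * vnorm sp c"
  proof -
    have "1 \<le> a powr s" using a1 s by (rule ge_one_powr_ge_zero)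
    then have "1 + a powr s \<le> 2 * a powr s" by simp
    moreover have "0 \<le> Acon * sqrt a * q * (N * q powr s)" using Acon_ge1 a1 q1 N(2) by simp
    ultimately show ?thesis using vnorm_nonneg by (intro mult_right_mono mult_left_mono) auto
  qed
  also have "\<dots> = 2 * Acon * N * (sqrt a * a powr s) * (q * q powr s) * vnorm sp c" by (simp add: algebra_simps)
  also have "sqrt a * a powr s = a powr (s + 1/2)"
    using a1 by (simp add: powr_add powr_half_sqrt[symmetric])
  also have "q * q powr s = q powr (s + 1)"
    using q1 by (simp add: powr_add)
  finally show ?thesis by (simp add: G_def a_def q_def)
qed

lemma part2_vec:
  assumes N: "\<And>x. vnorm sp (A 0 (L0p s x)) \<le> N * vnorm sp x" "N \<ge> 0" and s: "s \<ge> 0"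
  shows "vnorm sp (A m (L0p (s + 1) x)) \<le> G N s m * vnorm sp x"
proof -
  define S where "S = {k. hc x k \<noteq> 0}"
  have fS: "finite S" unfolding S_def by (rule hc_fin)
  define e where "e k = (real k + 1) powr (- (s + 1))" for k
  have G0: "G N s m \<ge> 0" using Acon_ge1 N(2) by (simp add: G_def)
  have "L0p (s + 1) x = (\<Sum>k\<in>S. sc (of_real (e k)) (hc x k))"
    unfolding L0pow_def S_def e_def ..
  then have Ae: "A m (L0p (s + 1) x) = (\<Sum>k\<in>S. sc (of_real (e k)) (A m (hc x k)))"
    by (simp add: module_hom.sum[OF mh_A] A_homog)
  have AW: "\<And>k. sc (of_real (e k)) (A m (hc x k)) \<in> W (of_int (int k + - m))"
    using A_Wi hc_Wi W_sc by blast
  have "nsq (A m (L0p (s + 1) x)) = (\<Sum>k\<in>S. nsq (sc (of_real (e k)) (A m (hc x k))))"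
    unfolding Ae
    by (rule nsq_sumW[where w="\<lambda>k. int k + - m", OF fS AW]) (auto simp: inj_on_def)
  also have "\<dots> \<le> (\<Sum>k\<in>S. (G N s m)^2 * nsq (hc x k))"
  proof (rule sum_mono)
    fix k assume "k \<in> S"
    have b: "vnorm sp (A m (hc x k)) \<le> G N s m * (1 + real k) powr (s + 1) * vnorm sp (hc x k)"
      by (rule A_hom_bound[OF N s hc_W])
    have e1: "e k * (1 + real k) powr (s + 1) = 1"
      unfolding e_def by (simp add: powr_add[symmetric] add.commute)
    have e0: "e k \<ge> 0" by (simp add: e_def)
    have "e k * vnorm sp (A m (hc x k)) \<le> e k * (G N s m * (1 + real k) powr (s + 1) * vnorm sp (hc x k))"
      using b e0 by (rule mult_left_mono)
    also have "\<dots> = G N s m * vnorm sp (hc x k)" using e1 by (simp add: algebra_simps)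
    finally have "e k * vnorm sp (A m (hc x k)) \<le> G N s m * vnorm sp (hc x k)" .
    then have "(e k * vnorm sp (A m (hc x k)))^2 \<le> (G N s m * vnorm sp (hc x k))^2"
      using e0 vnorm_nonneg by (intro power_mono) auto
    then show "nsq (sc (of_real (e k)) (A m (hc x k))) \<le> (G N s m)^2 * nsq (hc x k)"
      using e0 by (simp add: nsq_sc power_mult_distrib vnorm_sq)
  qed
  also have "\<dots> = (G N s m)^2 * nsq x" by (simp add: nsq_hc[of x] sum_distrib_left S_def)
  finally have "nsq (A m (L0p (s + 1) x)) \<le> (G N s m)^2 * nsq x" .
  then have "sqrt (nsq (A m (L0p (s + 1) x))) \<le> sqrt ((G N s m)^2 * nsq x)" by (rule real_sqrt_le_mono)
  then show ?thesis using G0 by (simp add: vnorm_nsq real_sqrt_mult)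
qed

lemma energy_vec:
  assumes N: "\<And>x. vnorm sp (A 0 (L0p s x)) \<le> N * vnorm sp x" "N \<ge> 0" and s: "s \<ge> 0"
    and b: "b \<in> Vl n"
  shows "vnorm sp (A m b) \<le> G N s m * (1 + real_of_int \<bar>n\<bar>) powr (s + 1) * vnorm sp b"
proof -
  obtain x where x: "L0p (s + 1) x = b" "vnorm sp x \<le> (1 + real_of_int \<bar>n\<bar>) powr (s + 1) * vnorm sp b"
    using L0pow_inv[of "s + 1" b n] s b by auto
  have G0: "G N s m \<ge> 0" using Acon_ge1 N(2) by (simp add: G_def)
  have "vnorm sp (A m b) \<le> G N s m * vnorm sp x" using part2_vec[OF N s, of m x] x(1) by simp
  also have "\<dots> \<le> G N s m * ((1 + real_of_int \<bar>n\<bar>) powr (s + 1) * vnorm sp b)" using x(2) G0 by (rule mult_left_mono)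
  finally show ?thesis by (simp add: mult.assoc)
qed

lemma part2:
  assumes s: "s \<ge> 0" and fin: "opnorm sp (\<lambda>b. A 0 (L0p s b)) < \<infinity>"
  shows "energy_bounds sc Y \<nu> sp (s + 1) a \<and>
       (\<forall>m::int.
          opnorm sp (\<lambda>b. A m (L0p (s + 1) b))
            \<le> ereal (2 * Acon * (1 + real_of_int \<bar>m\<bar>) powr (s + 1/2))
               * opnorm sp (\<lambda>b. A 0 (L0p s b)))"
proof -
  have h: "\<And>t x. A 0 (L0p s (sc t x)) = sc t (A 0 (L0p s x))" by (simp add: L0pow_sc A_homog)
  have O0: "0 \<le> opnorm sp (\<lambda>b. A 0 (L0p s b))" using h by (rule opn_nonneg)
  obtain N where NE: "opnorm sp (\<lambda>b. A 0 (L0p s b)) = ereal N" using O0 fin by (cases "opnorm sp (\<lambda>b. A 0 (L0p s b))") auto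
  have N0: "N \<ge> 0" using O0 NE by simp
  have Nb: "\<And>x. vnorm sp (A 0 (L0p s x)) \<le> N * vnorm sp x"
    using opn_use[OF NE h] by simp
  have E: "energy_bounds sc Y \<nu> sp (s + 1) a"
    unfolding energy_bounds_def
  proof (intro exI conjI allI)
    show "0 \<le> 2 * Acon * N" using Acon_ge1 N0 by simp
    show "0 \<le> s + 1/2" using s by simp
    fix m n :: int
    show "opnorm_le sc Y \<nu> sp (A m) n
          \<le> ereal (2 * Acon * N * (1 + real_of_int \<bar>m\<bar>) powr (s + 1/2) * (1 + real_of_int \<bar>n\<bar>) powr (s + 1))"
    proof (rule opn_le_bound)
      fix b assume "b \<in> Vl n"
      then show "vnorm sp (A m b) \<le> 2 * Acon * N * (1 + real_of_int \<bar>m\<bar>) powr (s + 1/2) * (1 + real_of_int \<bar>n\<bar>) powr (s + 1) * vnorm sp b"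
        using energy_vec[OF Nb N0 s] by (simp add: G_def)
    qed (use Acon_ge1 N0 in simp)
  qed
  have "\<forall>m::int. opnorm sp (\<lambda>b. A m (L0p (s + 1) b))
            \<le> ereal (2 * Acon * (1 + real_of_int \<bar>m\<bar>) powr (s + 1/2)) * opnorm sp (\<lambda>b. A 0 (L0p s b))"
  proof
    fix m :: int
    have "opnorm sp (\<lambda>b. A m (L0p (s + 1) b)) \<le> ereal (G N s m)"
      by (rule opn_bound) (use part2_vec[OF Nb N0 s] Acon_ge1 N0 in \<open>auto simp: G_def\<close>)
    then show "opnorm sp (\<lambda>b. A m (L0p (s + 1) b))
            \<le> ereal (2 * Acon * (1 + real_of_int \<bar>m\<bar>) powr (s + 1/2)) * opnorm sp (\<lambda>b. A 0 (L0p s b))"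
      unfolding NE by (simp add: G_def algebra_simps)
  qed
  with E show ?thesis by blast
qed

end

theorem mainTheorem3:
  fixes sc :: "complex \<Rightarrow> 'v::ab_group_add \<Rightarrow> 'v"
    and Y :: "'v \<Rightarrow> int \<Rightarrow> 'v \<Rightarrow> 'v"
    and \<Omega> \<nu> a :: 'v and sp :: "'v \<Rightarrow> 'v \<Rightarrow> complex" and star :: "'v \<Rightarrow> 'v"
    and d :: nat
  assumes "simple_unitary_VOA sc Y \<Omega> \<nu> sp star"
    and "primary sc Y \<nu> a d"
    and "d \<noteq> 1"
  shows "\<exists>A::real. A \<ge> 0 \<and>
    (\<forall>m n::int.
       opnorm_le sc Y \<nu> sp (pmode sc Y \<nu> a m) n
         \<le> ereal (A * sqrt (1 + real_of_int \<bar>m\<bar>) * (1 + real_of_int \<bar>n\<bar>))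
            * (opnorm_le sc Y \<nu> sp (pmode sc Y \<nu> a 0) n
               + opnorm_le sc Y \<nu> sp (pmode sc Y \<nu> a 0) (n - m))) \<and>
    (\<forall>s::real. s \<ge> 0 \<and> opnorm sp (\<lambda>b. pmode sc Y \<nu> a 0 (L0pow sc Y \<nu> s b)) < \<infinity> \<longrightarrow>
       energy_bounds sc Y \<nu> sp (s + 1) a \<and>
       (\<forall>m::int.
          opnorm sp (\<lambda>b. pmode sc Y \<nu> a m (L0pow sc Y \<nu> (s + 1) b))
            \<le> ereal (2 * A * (1 + real_of_int \<bar>m\<bar>) powr (s + 1/2))
               * opnorm sp (\<lambda>b. pmode sc Y \<nu> a 0 (L0pow sc Y \<nu> s b))))"
proof -
  interpret suvp sc Y \<Omega> \<nu> sp star a d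
    by unfold_locales (use assms in auto)
  show ?thesis
  proof (intro exI[of _ Acon] conjI allI impI)
    show "0 \<le> Acon" using Acon_ge1 by simp
    fix m n :: int
    show "opnorm_le sc Y \<nu> sp (pmode sc Y \<nu> a m) n
         \<le> ereal (Acon * sqrt (1 + real_of_int \<bar>m\<bar>) * (1 + real_of_int \<bar>n\<bar>))
            * (opnorm_le sc Y \<nu> sp (pmode sc Y \<nu> a 0) n
               + opnorm_le sc Y \<nu> sp (pmode sc Y \<nu> a 0) (n - m))" by (rule part1)
  next
    fix s :: real
    assume "0 \<le> s \<and> opnorm sp (\<lambda>b. pmode sc Y \<nu> a 0 (L0pow sc Y \<nu> s b)) < \<infinity>"
    then show "energy_bounds sc Y \<nu> sp (s + 1) a" using part2 by blast
  next
    fix s :: real and m :: int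
    assume "0 \<le> s \<and> opnorm sp (\<lambda>b. pmode sc Y \<nu> a 0 (L0pow sc Y \<nu> s b)) < \<infinity>"
    then show "opnorm sp (\<lambda>b. pmode sc Y \<nu> a m (L0pow sc Y \<nu> (s + 1) b))
            \<le> ereal (2 * Acon * (1 + real_of_int \<bar>m\<bar>) powr (s + 1/2))
               * opnorm sp (\<lambda>b. pmode sc Y \<nu> a 0 (L0pow sc Y \<nu> s b))" using part2 by blast
  qed
qed


end
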